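(* Let $\Lambda$ be an artin algebra and let $(g_i: X\to M_i)_{i\in I}$ be a family of nonzero maps of $\Lambda$-modules with each $M_i$ indecomposable. Then this family is a fork if and only if $g_i\notin\sum_{j\neq i}\operatorname{Hom}(M_j,M_i)\,g_j$ for all $i\in I$.
   Context: Modules are finite length left $\Lambda$-modules. A map $g: X\to M$ is left minimal if the image of $g$ is not contained in any proper direct summand of $M$. A family of maps $(g_i: X\to M_i)_{i\in I}$ is a fork if for every finite subset $J\subseteq I$ the map $(g_i)_{i\in J}: X\to\bigoplus_{i\in J}M_i$ is left minimal. Here $\sum_{j\neq i}\operatorname{Hom}(M_j,M_i)g_j$ denotes the set of finite sums of maps $p_jg_j$ with $j\neq i$ and $p_j: M_j\to M_i$. *)

theory Defs
  imports "HOL-Algebra.Algebra"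
begin

text \<open>Left modules over a (not necessarily commutative) ring R, using the
  module record of HOL-Algebra (whose locale module requires cring).\<close>

definition lmodule :: "('a, 'c) ring_scheme \<Rightarrow> ('a, 'b, 'd) module_scheme \<Rightarrow> bool" where
  "lmodule R M \<longleftrightarrow> ring R \<and> abelian_group M \<and>
    (\<forall>a\<in>carrier R. \<forall>x\<in>carrier M. a \<odot>\<^bsub>M\<^esub> x \<in> carrier M) \<and>
    (\<forall>a\<in>carrier R. \<forall>b\<in>carrier R. \<forall>x\<in>carrier M.
        (a \<oplus>\<^bsub>R\<^esub> b) \<odot>\<^bsub>M\<^esub> x = a \<odot>\<^bsub>M\<^esub> x \<oplus>\<^bsub>M\<^esub> b \<odot>\<^bsub>M\<^esub> x) \<and>
    (\<forall>a\<in>carrier R. \<forall>x\<in>carrier M. \<forall>y\<in>carrier M.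
        a \<odot>\<^bsub>M\<^esub> (x \<oplus>\<^bsub>M\<^esub> y) = a \<odot>\<^bsub>M\<^esub> x \<oplus>\<^bsub>M\<^esub> a \<odot>\<^bsub>M\<^esub> y) \<and>
    (\<forall>a\<in>carrier R. \<forall>b\<in>carrier R. \<forall>x\<in>carrier M.
        (a \<otimes>\<^bsub>R\<^esub> b) \<odot>\<^bsub>M\<^esub> x = a \<odot>\<^bsub>M\<^esub> (b \<odot>\<^bsub>M\<^esub> x)) \<and>
    (\<forall>x\<in>carrier M. \<one>\<^bsub>R\<^esub> \<odot>\<^bsub>M\<^esub> x = x)"

definition lsubmodule :: "('a, 'c) ring_scheme \<Rightarrow> ('a, 'b, 'd) module_scheme \<Rightarrow> 'b set \<Rightarrow> bool" where
  "lsubmodule R M U \<longleftrightarrow> U \<subseteq> carrier M \<and> \<zero>\<^bsub>M\<^esub> \<in> U \<and>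
    (\<forall>x\<in>U. \<forall>y\<in>U. x \<oplus>\<^bsub>M\<^esub> y \<in> U) \<and> (\<forall>x\<in>U. \<ominus>\<^bsub>M\<^esub> x \<in> U) \<and>
    (\<forall>a\<in>carrier R. \<forall>x\<in>U. a \<odot>\<^bsub>M\<^esub> x \<in> U)"

definition lhom :: "('a, 'c) ring_scheme \<Rightarrow> ('a, 'b, 'd) module_scheme \<Rightarrow> ('a, 'e, 'f) module_scheme
    \<Rightarrow> ('b \<Rightarrow> 'e) \<Rightarrow> bool" where
  "lhom R Xm M f \<longleftrightarrow> (\<forall>x\<in>carrier Xm. f x \<in> carrier M) \<and>
    (\<forall>x\<in>carrier Xm. \<forall>y\<in>carrier Xm. f (add Xm x y) = add M (f x) (f y)) \<and>
    (\<forall>a\<in>carrier R. \<forall>x\<in>carrier Xm. f (smult Xm a x) = smult M a (f x))"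

definition finite_length :: "('a, 'c) ring_scheme \<Rightarrow> ('a, 'b, 'd) module_scheme \<Rightarrow> bool" where
  "finite_length R M \<longleftrightarrow> (\<exists>n::nat. \<forall>(C::nat \<Rightarrow> 'b set) k.
     (\<forall>i\<le>k. lsubmodule R M (C i)) \<and> (\<forall>i<k. C i \<subset> C (Suc i)) \<longrightarrow> k \<le> n)"

definition direct_summand :: "('a, 'c) ring_scheme \<Rightarrow> ('a, 'b, 'd) module_scheme \<Rightarrow> 'b set \<Rightarrow> bool" where
  "direct_summand R M U \<longleftrightarrow> lsubmodule R M U \<and>
    (\<exists>V. lsubmodule R M V \<and> U \<inter> V = {\<zero>\<^bsub>M\<^esub>} \<and>
         (\<forall>x\<in>carrier M. \<exists>u\<in>U. \<exists>v\<in>V. x = u \<oplus>\<^bsub>M\<^esub> v))"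

definition indecomposable :: "('a, 'c) ring_scheme \<Rightarrow> ('a, 'b, 'd) module_scheme \<Rightarrow> bool" where
  "indecomposable R M \<longleftrightarrow> carrier M \<noteq> {\<zero>\<^bsub>M\<^esub>} \<and>
    (\<forall>U. direct_summand R M U \<longrightarrow> U = {\<zero>\<^bsub>M\<^esub>} \<or> U = carrier M)"

definition left_minimal :: "('a, 'c) ring_scheme \<Rightarrow> ('a, 'b, 'd) module_scheme \<Rightarrow> ('a, 'e, 'f) module_scheme
    \<Rightarrow> ('b \<Rightarrow> 'e) \<Rightarrow> bool" where
  "left_minimal R Xm N g \<longleftrightarrow>
    \<not> (\<exists>U. direct_summand R N U \<and> U \<noteq> carrier N \<and> g ` carrier Xm \<subseteq> U)"

text \<open>Direct sum of the family M over a (finite) index set J; elements are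
  functions on J, extended by undefined outside J.\<close>
definition dsum :: "('i \<Rightarrow> ('a, 'b) module) \<Rightarrow> 'i set \<Rightarrow> ('a, 'i \<Rightarrow> 'b) module" where
  "dsum M J = \<lparr> carrier = {f. (\<forall>j\<in>J. f j \<in> carrier (M j)) \<and> (\<forall>j. j \<notin> J \<longrightarrow> f j = undefined)},
      monoid.mult = (\<lambda>f h. undefined), monoid.one = undefined,
      ring.zero = (\<lambda>j\<in>J. \<zero>\<^bsub>M j\<^esub>),
      ring.add = (\<lambda>f h. \<lambda>j\<in>J. f j \<oplus>\<^bsub>M j\<^esub> h j),
      module.smult = (\<lambda>a f. \<lambda>j\<in>J. a \<odot>\<^bsub>M j\<^esub> f j) \<rparr>"

definition tuple_map :: "('i \<Rightarrow> 'c \<Rightarrow> 'b) \<Rightarrow> 'i set \<Rightarrow> 'c \<Rightarrow> ('i \<Rightarrow> 'b)" where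
  "tuple_map g J = (\<lambda>x. \<lambda>j\<in>J. g j x)"

definition fork :: "('a, 'r) ring_scheme \<Rightarrow> ('a, 'c) module \<Rightarrow> ('i \<Rightarrow> ('a, 'b) module)
    \<Rightarrow> ('i \<Rightarrow> 'c \<Rightarrow> 'b) \<Rightarrow> 'i set \<Rightarrow> bool" where
  "fork R Xm M g I \<longleftrightarrow> (\<forall>J. finite J \<and> J \<subseteq> I \<longrightarrow> left_minimal R Xm (dsum M J) (tuple_map g J))"

definition in_sum_others :: "('a, 'r) ring_scheme \<Rightarrow> ('a, 'c) module \<Rightarrow> ('i \<Rightarrow> ('a, 'b) module)
    \<Rightarrow> ('i \<Rightarrow> 'c \<Rightarrow> 'b) \<Rightarrow> 'i set \<Rightarrow> 'i \<Rightarrow> bool" where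
  "in_sum_others R Xm M g I i \<longleftrightarrow> (\<exists>F (p :: 'i \<Rightarrow> 'b \<Rightarrow> 'b). finite F \<and> F \<subseteq> I - {i} \<and>
     (\<forall>j\<in>F. lhom R (M j) (M i) (p j)) \<and>
     (\<forall>x\<in>carrier Xm. g i x = finsum (M i) (\<lambda>j. p j (g j x)) F))"

definition artinian_ring :: "('a, 'r) ring_scheme \<Rightarrow> bool" where
  "artinian_ring S \<longleftrightarrow> cring S \<and> (\<forall>C::nat \<Rightarrow> 'a set.
     (\<forall>n. ideal (C n) S \<and> C (Suc n) \<subseteq> C n) \<longrightarrow> (\<exists>N. \<forall>n\<ge>N. C n = C N))"

definition artin_algebra :: "('a, 'r) ring_scheme \<Rightarrow> bool" where
  "artin_algebra R \<longleftrightarrow> ring R \<and> (\<exists>S. subring S R \<and>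
     (\<forall>s\<in>S. \<forall>a\<in>carrier R. s \<otimes>\<^bsub>R\<^esub> a = a \<otimes>\<^bsub>R\<^esub> s) \<and>
     artinian_ring (R\<lparr>carrier := S\<rparr>) \<and>
     (\<exists>F. finite F \<and> F \<subseteq> carrier R \<and>
        (\<forall>a\<in>carrier R. \<exists>c. (\<forall>x\<in>F. c x \<in> S) \<and> a = finsum R (\<lambda>x. c x \<otimes>\<^bsub>R\<^esub> x) F)))"

end

theory Submission
  imports Defs
begin


lemma lmod_ag: "lmodule R M \<Longrightarrow> abelian_group M"
  by (simp add: lmodule_def)

lemma lmod_ring: "lmodule R M \<Longrightarrow> ring R"
  by (simp add: lmodule_def)

lemma lmod_smult_closed: "lmodule R M \<Longrightarrow> a \<in> carrier R \<Longrightarrow> x \<in> carrier M \<Longrightarrow> a \<odot>\<^bsub>M\<^esub> x \<in> carrier M"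
  by (simp add: lmodule_def)

lemma lmod_smult_add: "lmodule R M \<Longrightarrow> a \<in> carrier R \<Longrightarrow> x \<in> carrier M \<Longrightarrow> y \<in> carrier M \<Longrightarrow>
   a \<odot>\<^bsub>M\<^esub> (x \<oplus>\<^bsub>M\<^esub> y) = a \<odot>\<^bsub>M\<^esub> x \<oplus>\<^bsub>M\<^esub> a \<odot>\<^bsub>M\<^esub> y"
  by (simp add: lmodule_def)

lemma add_map_zero:
  assumes A: "abelian_group A" and B: "abelian_group B"
    and cl: "\<And>x. x \<in> carrier A \<Longrightarrow> f x \<in> carrier B"
    and ad: "\<And>x y. x \<in> carrier A \<Longrightarrow> y \<in> carrier A \<Longrightarrow> f (x \<oplus>\<^bsub>A\<^esub> y) = f x \<oplus>\<^bsub>B\<^esub> f y"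
  shows "f \<zero>\<^bsub>A\<^esub> = \<zero>\<^bsub>B\<^esub>"
proof -
  interpret A: abelian_group A by fact
  interpret B: abelian_group B by fact
  have "f \<zero>\<^bsub>A\<^esub> = f \<zero>\<^bsub>A\<^esub> \<oplus>\<^bsub>B\<^esub> f \<zero>\<^bsub>A\<^esub>" using ad[of "\<zero>\<^bsub>A\<^esub>" "\<zero>\<^bsub>A\<^esub>"] by simp
  thus ?thesis using cl[of "\<zero>\<^bsub>A\<^esub>"] by (metis A.zero_closed B.add.r_cancel_one' B.zero_closed B.r_zero)
qed

lemma add_map_neg:
  assumes A: "abelian_group A" and B: "abelian_group B"
    and cl: "\<And>x. x \<in> carrier A \<Longrightarrow> f x \<in> carrier B"
    and ad: "\<And>x y. x \<in> carrier A \<Longrightarrow> y \<in> carrier A \<Longrightarrow> f (x \<oplus>\<^bsub>A\<^esub> y) = f x \<oplus>\<^bsub>B\<^esub> f y"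
    and x: "x \<in> carrier A"
  shows "f (\<ominus>\<^bsub>A\<^esub> x) = \<ominus>\<^bsub>B\<^esub> f x"
proof -
  interpret A: abelian_group A by fact
  interpret B: abelian_group B by fact
  have "f (\<ominus>\<^bsub>A\<^esub> x) \<oplus>\<^bsub>B\<^esub> f x = \<zero>\<^bsub>B\<^esub>"
  proof -
    have "f (\<ominus>\<^bsub>A\<^esub> x) \<oplus>\<^bsub>B\<^esub> f x = f (\<ominus>\<^bsub>A\<^esub> x \<oplus>\<^bsub>A\<^esub> x)"
      using ad x by simp
    also have "\<ominus>\<^bsub>A\<^esub> x \<oplus>\<^bsub>A\<^esub> x = \<zero>\<^bsub>A\<^esub>" using x by (rule A.l_neg)
    finally show ?thesis using add_map_zero[OF A B cl ad] by simp
  qed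
  thus ?thesis using cl x by (metis A.a_inv_closed B.minus_equality)
qed

lemma add_map_finsum:
  assumes A: "abelian_group A" and B: "abelian_group B"
    and cl: "\<And>x. x \<in> carrier A \<Longrightarrow> f x \<in> carrier B"
    and ad: "\<And>x y. x \<in> carrier A \<Longrightarrow> y \<in> carrier A \<Longrightarrow> f (x \<oplus>\<^bsub>A\<^esub> y) = f x \<oplus>\<^bsub>B\<^esub> f y"
    and S: "finite S" and h: "\<And>s. s \<in> S \<Longrightarrow> h s \<in> carrier A"
  shows "f (finsum A h S) = finsum B (\<lambda>s. f (h s)) S"
  using S h
proof (induction S rule: finite_induct)
  case empty
  then show ?case using add_map_zero[OF A B cl ad] A B by (simp add: abelian_group.axioms abelian_monoid.finsum_empty)
next
  case (insert s S)
  interpret A: abelian_group A by fact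
  interpret B: abelian_group B by fact
  have "finsum A h (insert s S) = h s \<oplus>\<^bsub>A\<^esub> finsum A h S"
    using insert by (intro A.finsum_insert) auto
  moreover have "finsum B (\<lambda>s. f (h s)) (insert s S) = f (h s) \<oplus>\<^bsub>B\<^esub> finsum B (\<lambda>s. f (h s)) S"
    using insert cl by (intro B.finsum_insert) auto
  ultimately show ?case using insert ad A.finsum_closed by auto
qed

lemma lmod_smult_zero: "lmodule R M \<Longrightarrow> a \<in> carrier R \<Longrightarrow> a \<odot>\<^bsub>M\<^esub> \<zero>\<^bsub>M\<^esub> = \<zero>\<^bsub>M\<^esub>"
  by (rule add_map_zero[of M M "\<lambda>x. a \<odot>\<^bsub>M\<^esub> x"]) (auto simp: lmod_ag lmod_smult_closed lmod_smult_add)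

lemma lmod_smult_neg: "lmodule R M \<Longrightarrow> a \<in> carrier R \<Longrightarrow> x \<in> carrier M \<Longrightarrow> a \<odot>\<^bsub>M\<^esub> (\<ominus>\<^bsub>M\<^esub> x) = \<ominus>\<^bsub>M\<^esub> (a \<odot>\<^bsub>M\<^esub> x)"
  by (rule add_map_neg[of M M "\<lambda>x. a \<odot>\<^bsub>M\<^esub> x"]) (auto simp: lmod_ag lmod_smult_closed lmod_smult_add)

lemma lmod_smult_finsum: "lmodule R M \<Longrightarrow> a \<in> carrier R \<Longrightarrow> finite S \<Longrightarrow> (\<And>s. s \<in> S \<Longrightarrow> h s \<in> carrier M) \<Longrightarrow>
   a \<odot>\<^bsub>M\<^esub> finsum M h S = finsum M (\<lambda>s. a \<odot>\<^bsub>M\<^esub> h s) S"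
  by (rule add_map_finsum[of M M "\<lambda>x. a \<odot>\<^bsub>M\<^esub> x"]) (auto simp: lmod_ag lmod_smult_closed lmod_smult_add)



lemma lhom_closed: "lhom R XX YY f \<Longrightarrow> x \<in> carrier XX \<Longrightarrow> f x \<in> carrier YY"
  by (simp add: lhom_def)
lemma lhom_add: "lhom R XX YY f \<Longrightarrow> x \<in> carrier XX \<Longrightarrow> y \<in> carrier XX \<Longrightarrow> f (x \<oplus>\<^bsub>XX\<^esub> y) = f x \<oplus>\<^bsub>YY\<^esub> f y"
  by (simp add: lhom_def)
lemma lhom_smult: "lhom R XX YY f \<Longrightarrow> a \<in> carrier R \<Longrightarrow> x \<in> carrier XX \<Longrightarrow> f (a \<odot>\<^bsub>XX\<^esub> x) = a \<odot>\<^bsub>YY\<^esub> f x"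
  by (simp add: lhom_def)

lemma lhom_zero: "lmodule R XX \<Longrightarrow> lmodule R YY \<Longrightarrow> lhom R XX YY f \<Longrightarrow> f \<zero>\<^bsub>XX\<^esub> = \<zero>\<^bsub>YY\<^esub>"
  by (rule add_map_zero[of XX YY f]) (auto simp: lmod_ag lhom_closed lhom_add)

lemma lhom_neg: "lmodule R XX \<Longrightarrow> lmodule R YY \<Longrightarrow> lhom R XX YY f \<Longrightarrow> x \<in> carrier XX \<Longrightarrow> f (\<ominus>\<^bsub>XX\<^esub> x) = \<ominus>\<^bsub>YY\<^esub> f x"
  by (rule add_map_neg[of XX YY f]) (auto simp: lmod_ag lhom_closed lhom_add)

lemma lhom_minus: "lmodule R XX \<Longrightarrow> lmodule R YY \<Longrightarrow> lhom R XX YY f \<Longrightarrow> x \<in> carrier XX \<Longrightarrow> y \<in> carrier XX \<Longrightarrow>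
   f (x \<ominus>\<^bsub>XX\<^esub> y) = f x \<ominus>\<^bsub>YY\<^esub> f y"
  unfolding a_minus_def
  by (simp add: lhom_add lhom_neg abelian_group.a_inv_closed lmod_ag)

lemma lhom_finsum: "lmodule R XX \<Longrightarrow> lmodule R YY \<Longrightarrow> lhom R XX YY f \<Longrightarrow> finite S \<Longrightarrow> (\<And>s. s \<in> S \<Longrightarrow> h s \<in> carrier XX) \<Longrightarrow>
   f (finsum XX h S) = finsum YY (\<lambda>s. f (h s)) S"
  by (rule add_map_finsum[of XX YY f]) (auto simp: lmod_ag lhom_closed lhom_add)

lemma lhom_comp: "lhom R XX YY f \<Longrightarrow> lhom R YY ZZ g \<Longrightarrow> lhom R XX ZZ (\<lambda>x. g (f x))"
  by (simp add: lhom_def)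

lemma lhom_id: "lhom R XX XX (\<lambda>x. x)"
  by (simp add: lhom_def)

lemma lhom_zerof: assumes YY: "lmodule R YY" shows "lhom R XX YY (\<lambda>x. \<zero>\<^bsub>YY\<^esub>)"
proof -
  interpret YY: abelian_group YY using YY by (rule lmod_ag)
  show ?thesis using YY by (simp add: lhom_def lmod_smult_zero)
qed

lemma lhom_addf:
  assumes YY: "lmodule R YY" and f: "lhom R XX YY f" and g: "lhom R XX YY g"
  shows "lhom R XX YY (\<lambda>x. f x \<oplus>\<^bsub>YY\<^esub> g x)"
proof -
  interpret YY: abelian_group YY using YY by (rule lmod_ag)
  show ?thesis unfolding lhom_def
  proof (intro conjI ballI)
    fix x assume "x \<in> carrier XX" thus "f x \<oplus>\<^bsub>YY\<^esub> g x \<in> carrier YY" using f g by (simp add: lhom_closed)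
  next
    fix x y assume xy: "x \<in> carrier XX" "y \<in> carrier XX"
    thus "f (x \<oplus>\<^bsub>XX\<^esub> y) \<oplus>\<^bsub>YY\<^esub> g (x \<oplus>\<^bsub>XX\<^esub> y) = f x \<oplus>\<^bsub>YY\<^esub> g x \<oplus>\<^bsub>YY\<^esub> (f y \<oplus>\<^bsub>YY\<^esub> g y)"
      using f g by (simp add: lhom_add lhom_closed YY.a_ac)
  next
    fix a x assume ax: "a \<in> carrier R" "x \<in> carrier XX"
    thus "f (a \<odot>\<^bsub>XX\<^esub> x) \<oplus>\<^bsub>YY\<^esub> g (a \<odot>\<^bsub>XX\<^esub> x) = a \<odot>\<^bsub>YY\<^esub> (f x \<oplus>\<^bsub>YY\<^esub> g x)"
      using f g YY by (simp add: lhom_smult lhom_closed lmod_smult_add)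
  qed
qed

lemma lhom_negf:
  assumes YY: "lmodule R YY" and f: "lhom R XX YY f"
  shows "lhom R XX YY (\<lambda>x. \<ominus>\<^bsub>YY\<^esub> f x)"
proof -
  interpret YY: abelian_group YY using YY by (rule lmod_ag)
  show ?thesis unfolding lhom_def
  proof (intro conjI ballI)
    fix x assume "x \<in> carrier XX" thus "\<ominus>\<^bsub>YY\<^esub> f x \<in> carrier YY" using f by (simp add: lhom_closed)
  next
    fix x y assume xy: "x \<in> carrier XX" "y \<in> carrier XX"
    thus "\<ominus>\<^bsub>YY\<^esub> f (x \<oplus>\<^bsub>XX\<^esub> y) = \<ominus>\<^bsub>YY\<^esub> f x \<oplus>\<^bsub>YY\<^esub> \<ominus>\<^bsub>YY\<^esub> f y"
      using f by (simp add: lhom_add lhom_closed YY.minus_add)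
  next
    fix a x assume ax: "a \<in> carrier R" "x \<in> carrier XX"
    thus "\<ominus>\<^bsub>YY\<^esub> f (a \<odot>\<^bsub>XX\<^esub> x) = a \<odot>\<^bsub>YY\<^esub> (\<ominus>\<^bsub>YY\<^esub> f x)"
      using f YY by (simp add: lhom_smult lhom_closed lmod_smult_neg)
  qed
qed

lemma lhom_minusf:
  assumes YY: "lmodule R YY" and f: "lhom R XX YY f" and g: "lhom R XX YY g"
  shows "lhom R XX YY (\<lambda>x. f x \<ominus>\<^bsub>YY\<^esub> g x)"
  unfolding a_minus_def using lhom_addf[OF YY f lhom_negf[OF YY g]] .

lemma lhom_cong:
  assumes XX: "lmodule R XX" and f: "lhom R XX YY f" and eq: "\<And>x. x \<in> carrier XX \<Longrightarrow> g x = f x"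
  shows "lhom R XX YY g"
proof -
  interpret XX: abelian_group XX using XX by (rule lmod_ag)
  show ?thesis using f eq XX unfolding lhom_def by (simp add: lmod_smult_closed)
qed

lemma lhom_finsumf:
  assumes XX: "lmodule R XX" and YY: "lmodule R YY" and S: "finite S" and F: "\<And>s. s \<in> S \<Longrightarrow> lhom R XX YY (F s)"
  shows "lhom R XX YY (\<lambda>x. finsum YY (\<lambda>s. F s x) S)"
  using S F
proof (induction S rule: finite_induct)
  case empty
  then show ?case using lhom_zerof[OF YY] YY by (simp add: lmod_ag abelian_group.axioms abelian_monoid.finsum_empty)
next
  case (insert s S)
  interpret YY: abelian_group YY using YY by (rule lmod_ag)
  have eq: "\<And>x. x \<in> carrier XX \<Longrightarrow> finsum YY (\<lambda>s. F s x) (insert s S) = F s x \<oplus>\<^bsub>YY\<^esub> finsum YY (\<lambda>s. F s x) S"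
    using insert by (intro YY.finsum_insert) (auto intro: lhom_closed)
  have h: "lhom R XX YY (\<lambda>x. F s x \<oplus>\<^bsub>YY\<^esub> finsum YY (\<lambda>s. F s x) S)"
    using insert by (intro lhom_addf[OF YY]) auto
  show ?case using h eq by (intro lhom_cong[OF XX h]) simp
qed

lemma lhom_inv:
  assumes XX: "lmodule R XX" and YY: "lmodule R YY" and f: "lhom R XX YY f"
    and b: "bij_betw f (carrier XX) (carrier YY)"
  shows "lhom R YY XX (inv_into (carrier XX) f)"
    and "\<And>y. y \<in> carrier YY \<Longrightarrow> f (inv_into (carrier XX) f y) = y"
    and "\<And>x. x \<in> carrier XX \<Longrightarrow> inv_into (carrier XX) f (f x) = x"
proof -
  let ?g = "inv_into (carrier XX) f"
  have gc: "\<And>y. y \<in> carrier YY \<Longrightarrow> ?g y \<in> carrier XX" using b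
    by (metis bij_betw_def inv_into_into)
  show fg: "\<And>y. y \<in> carrier YY \<Longrightarrow> f (?g y) = y" using b by (meson bij_betw_inv_into_right)
  show gf: "\<And>x. x \<in> carrier XX \<Longrightarrow> ?g (f x) = x" using b by (meson bij_betw_inv_into_left)
  show "lhom R YY XX ?g" unfolding lhom_def
  proof (intro conjI ballI)
    fix y assume "y \<in> carrier YY" thus "?g y \<in> carrier XX" by (rule gc)
  next
    fix x y assume xy: "x \<in> carrier YY" "y \<in> carrier YY"
    have "?g x \<oplus>\<^bsub>XX\<^esub> ?g y \<in> carrier XX" using gc xy XX by (simp add: lmod_ag abelian_monoid.a_closed abelian_group.axioms(1))
    moreover have "f (?g x \<oplus>\<^bsub>XX\<^esub> ?g y) = x \<oplus>\<^bsub>YY\<^esub> y" using f xy gc fg by (simp add: lhom_add)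
    ultimately show "?g (x \<oplus>\<^bsub>YY\<^esub> y) = ?g x \<oplus>\<^bsub>XX\<^esub> ?g y" using gf by metis
  next
    fix a x assume ax: "a \<in> carrier R" "x \<in> carrier YY"
    have "a \<odot>\<^bsub>XX\<^esub> ?g x \<in> carrier XX" using gc ax XX by (simp add: lmod_smult_closed)
    moreover have "f (a \<odot>\<^bsub>XX\<^esub> ?g x) = a \<odot>\<^bsub>YY\<^esub> x" using f ax gc fg by (simp add: lhom_smult)
    ultimately show "?g (a \<odot>\<^bsub>YY\<^esub> x) = a \<odot>\<^bsub>XX\<^esub> ?g x" using gf by metis
  qed
qed



lemma ag_minus0: "abelian_group G \<Longrightarrow> x \<in> carrier G \<Longrightarrow> y \<in> carrier G \<Longrightarrow> (x \<ominus>\<^bsub>G\<^esub> y = \<zero>\<^bsub>G\<^esub>) = (x = y)"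
proof -
  assume G: "abelian_group G" and xy: "x \<in> carrier G" "y \<in> carrier G"
  interpret G: abelian_group G by fact
  have "y \<ominus>\<^bsub>G\<^esub> y = \<zero>\<^bsub>G\<^esub>" using xy by (simp add: G.minus_eq G.r_neg)
  moreover have "(x \<ominus>\<^bsub>G\<^esub> y = y \<ominus>\<^bsub>G\<^esub> y) = (x = y)" using xy by (simp add: G.minus_eq)
  ultimately show ?thesis by simp
qed

lemma ag_minus_add: "abelian_group G \<Longrightarrow> x \<in> carrier G \<Longrightarrow> y \<in> carrier G \<Longrightarrow> (x \<ominus>\<^bsub>G\<^esub> y) \<oplus>\<^bsub>G\<^esub> y = x"
proof -
  assume G: "abelian_group G" and xy: "x \<in> carrier G" "y \<in> carrier G"
  interpret G: abelian_group G by fact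
  show ?thesis using xy by (simp add: G.minus_eq G.a_assoc G.l_neg)
qed

lemma lsub_kernel:
  assumes XX: "lmodule R XX" and YY: "lmodule R YY" and f: "lhom R XX YY f"
  shows "lsubmodule R XX {x\<in>carrier XX. f x = \<zero>\<^bsub>YY\<^esub>}"
proof -
  interpret XX: abelian_group XX using XX by (rule lmod_ag)
  interpret YY: abelian_group YY using YY by (rule lmod_ag)
  show ?thesis unfolding lsubmodule_def
  proof (intro conjI ballI)
    show "{x \<in> carrier XX. f x = \<zero>\<^bsub>YY\<^esub>} \<subseteq> carrier XX" by blast
    show "\<zero>\<^bsub>XX\<^esub> \<in> {x \<in> carrier XX. f x = \<zero>\<^bsub>YY\<^esub>}" using lhom_zero[OF XX YY f] by simp
  next
    fix x y assume "x \<in> {x \<in> carrier XX. f x = \<zero>\<^bsub>YY\<^esub>}" "y \<in> {x \<in> carrier XX. f x = \<zero>\<^bsub>YY\<^esub>}"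
    thus "x \<oplus>\<^bsub>XX\<^esub> y \<in> {x \<in> carrier XX. f x = \<zero>\<^bsub>YY\<^esub>}" using lhom_add[OF f] by simp
  next
    fix x assume "x \<in> {x \<in> carrier XX. f x = \<zero>\<^bsub>YY\<^esub>}"
    thus "\<ominus>\<^bsub>XX\<^esub> x \<in> {x \<in> carrier XX. f x = \<zero>\<^bsub>YY\<^esub>}" using lhom_neg[OF XX YY f] by simp
  next
    fix a x assume "a \<in> carrier R" "x \<in> {x \<in> carrier XX. f x = \<zero>\<^bsub>YY\<^esub>}"
    thus "a \<odot>\<^bsub>XX\<^esub> x \<in> {x \<in> carrier XX. f x = \<zero>\<^bsub>YY\<^esub>}"
      using lhom_smult[OF f] lmod_smult_closed[OF XX] lmod_smult_zero[OF YY] by simp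
  qed
qed

lemma lsub_image:
  assumes XX: "lmodule R XX" and YY: "lmodule R YY" and f: "lhom R XX YY f"
  shows "lsubmodule R YY (f ` carrier XX)"
proof -
  interpret XX: abelian_group XX using XX by (rule lmod_ag)
  interpret YY: abelian_group YY using YY by (rule lmod_ag)
  have "f \<zero>\<^bsub>XX\<^esub> \<in> f ` carrier XX" using XX.zero_closed by (rule imageI)
  hence z: "\<zero>\<^bsub>YY\<^esub> \<in> f ` carrier XX" using lhom_zero[OF XX YY f] by simp
  show ?thesis unfolding lsubmodule_def
  proof (intro conjI ballI)
    show "\<zero>\<^bsub>YY\<^esub> \<in> f ` carrier XX" by (rule z)
    show "f ` carrier XX \<subseteq> carrier YY" using lhom_closed[OF f] by blast
  next
    fix x y assume "x \<in> f ` carrier XX" "y \<in> f ` carrier XX"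
    then obtain u v where "u \<in> carrier XX" "v \<in> carrier XX" "x = f u" "y = f v" by blast
    moreover have "f (u \<oplus>\<^bsub>XX\<^esub> v) \<in> f ` carrier XX" using calculation(1,2) XX.a_closed by blast
    ultimately show "x \<oplus>\<^bsub>YY\<^esub> y \<in> f ` carrier XX" using lhom_add[OF f] by simp
  next
    fix x assume "x \<in> f ` carrier XX"
    then obtain u where "u \<in> carrier XX" "x = f u" by blast
    moreover have "f (\<ominus>\<^bsub>XX\<^esub> u) \<in> f ` carrier XX" using calculation(1) XX.a_inv_closed by blast
    ultimately show "\<ominus>\<^bsub>YY\<^esub> x \<in> f ` carrier XX" using lhom_neg[OF XX YY f] by simp
  next
    fix a x assume "a \<in> carrier R" "x \<in> f ` carrier XX"
    then obtain u where "a \<in> carrier R" "u \<in> carrier XX" "x = f u" by blast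
    moreover have "f (a \<odot>\<^bsub>XX\<^esub> u) \<in> f ` carrier XX" using calculation(1,2) lmod_smult_closed[OF XX] by blast
    ultimately show "a \<odot>\<^bsub>YY\<^esub> x \<in> f ` carrier XX" using lhom_smult[OF f] by simp
  qed
qed

lemma lhom_pow: "lhom R M M a \<Longrightarrow> lhom R M M (a ^^ n)"
proof (induction n)
  case 0 then show ?case using lhom_id[of R M] by (simp add: id_def)
next
  case (Suc n) then show ?case using lhom_comp[of R M M "a ^^ n" M a] by (simp add: comp_def)
qed

lemma fp_add: "(a ^^ (m + n)) x = (a ^^ m) ((a ^^ n) x)"
  by (simp add: funpow_add)

lemma fitting:
  assumes M: "lmodule R M" and fl: "finite_length R M" and ind: "indecomposable R M"
    and a: "lhom R M M a"
  shows "bij_betw a (carrier M) (carrier M) \<or> (\<exists>m. \<forall>x\<in>carrier M. (a ^^ m) x = \<zero>\<^bsub>M\<^esub>)"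
proof -
  interpret MG: abelian_group M using M by (rule lmod_ag)
  define K where "K n = {x\<in>carrier M. (a ^^ n) x = \<zero>\<^bsub>M\<^esub>}" for n
  define Im where "Im n = (a ^^ n) ` carrier M" for n
  have ap: "\<And>n. lhom R M M (a ^^ n)" using a by (rule lhom_pow)
  have apc: "\<And>n x. x \<in> carrier M \<Longrightarrow> (a ^^ n) x \<in> carrier M" using lhom_closed[OF ap] by blast
  have ap0: "\<And>n. (a ^^ n) \<zero>\<^bsub>M\<^esub> = \<zero>\<^bsub>M\<^esub>" using ap lhom_zero[OF M M] by blast
  obtain N where N: "\<And>C k. (\<forall>i\<le>k. lsubmodule R M (C i)) \<Longrightarrow> (\<forall>i<k. C i \<subset> C (Suc i)) \<Longrightarrow> k \<le> N"
    using fl unfolding finite_length_def by blast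
  have Ksub: "\<And>n. lsubmodule R M (K n)" unfolding K_def using lsub_kernel[OF M M ap] .
  have Isub: "\<And>n. lsubmodule R M (Im n)" unfolding Im_def using lsub_image[OF M M ap] .
  have Kmono: "\<And>n. K n \<subseteq> K (Suc n)"
  proof
    fix n x assume "x \<in> K n"
    thus "x \<in> K (Suc n)" unfolding K_def using lhom_zero[OF M M a] by simp
  qed
  have Imono: "\<And>n. Im (Suc n) \<subseteq> Im n"
  proof
    fix n y assume "y \<in> Im (Suc n)"
    then obtain x where x: "x \<in> carrier M" "y = (a ^^ Suc n) x" unfolding Im_def by blast
    hence "y = (a ^^ n) (a x)" by (simp add: funpow_Suc_right del: funpow.simps)
    moreover have "a x \<in> carrier M" using lhom_closed[OF a x(1)] .
    ultimately show "y \<in> Im n" unfolding Im_def by (rule image_eqI)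
  qed
  have "\<exists>n1. K n1 = K (Suc n1)"
  proof (rule ccontr)
    assume "\<not> ?thesis"
    hence "\<forall>i<Suc N. K i \<subset> K (Suc i)" using Kmono by blast
    hence "Suc N \<le> N" using N[of "Suc N" K] Ksub by blast
    thus False by simp
  qed
  then obtain n1 where n1: "K n1 = K (Suc n1)" by blast
  have "\<exists>n2. Im n2 = Im (Suc n2)"
  proof (rule ccontr)
    assume ne: "\<not> ?thesis"
    have "\<forall>i<Suc N. Im (Suc N - i) \<subset> Im (Suc N - Suc i)"
    proof (intro allI impI)
      fix i assume "i < Suc N"
      hence e: "Suc N - i = Suc (N - i)" "Suc N - Suc i = N - i" by auto
      show "Im (Suc N - i) \<subset> Im (Suc N - Suc i)" unfolding e using Imono ne by blast
    qed
    hence "Suc N \<le> N" using N[of "Suc N" "\<lambda>i. Im (Suc N - i)"] Isub by blast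
    thus False by simp
  qed
  then obtain n2 where n2: "Im n2 = Im (Suc n2)" by blast
  have Kst: "\<And>d. K (n1 + d) = K n1"
  proof -
    fix d
    have "K (n1 + d) \<subseteq> K n1"
    proof (induction d)
      case 0 then show ?case by simp
    next
      case (Suc d)
      show ?case
      proof
        fix x assume x: "x \<in> K (n1 + Suc d)"
        hence xc: "x \<in> carrier M" and "(a ^^ (Suc n1 + d)) x = \<zero>\<^bsub>M\<^esub>" unfolding K_def by auto
        hence "(a ^^ d) x \<in> K (Suc n1)" unfolding K_def using apc by (simp add: fp_add)
        hence "(a ^^ d) x \<in> K n1" using n1 by simp
        hence "x \<in> K (n1 + d)" unfolding K_def using xc by (simp add: fp_add)
        thus "x \<in> K n1" using Suc by blast
      qed
    qed
    moreover have "K n1 \<subseteq> K (n1 + d)"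
    proof (induction d)
      case 0 then show ?case by simp
    next
      case (Suc d) then show ?case using Kmono[of "n1 + d"] by simp
    qed
    ultimately show "K (n1 + d) = K n1" by blast
  qed
  have Ist: "\<And>d. Im (n2 + d) = Im n2"
  proof -
    fix d
    have "Im n2 \<subseteq> Im (n2 + d)"
    proof (induction d)
      case 0 then show ?case by simp
    next
      case (Suc d)
      show ?case
      proof
        fix y assume "y \<in> Im n2"
        then obtain x where x: "x \<in> carrier M" "y = (a ^^ (d + n2)) x" using Suc unfolding Im_def
          by (auto simp: add.commute)
        hence "(a ^^ n2) x \<in> Im n2" unfolding Im_def by (intro imageI)
        hence "(a ^^ n2) x \<in> Im (Suc n2)" using n2 by simp
        then obtain z where z: "z \<in> carrier M" "(a ^^ n2) x = (a ^^ (Suc n2)) z" unfolding Im_def by blast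
        have "y = (a ^^ d) ((a ^^ (Suc n2)) z)" using x z by (simp add: fp_add del: funpow.simps)
        also have "\<dots> = (a ^^ (n2 + Suc d)) z" by (simp add: fp_add[symmetric] add.commute del: funpow.simps)
        finally show "y \<in> Im (n2 + Suc d)" unfolding Im_def using z(1) by (rule image_eqI)
      qed
    qed
    moreover have "Im (n2 + d) \<subseteq> Im n2"
    proof (induction d)
      case 0 then show ?case by simp
    next
      case (Suc d) then show ?case using Imono[of "n2 + d"] by simp
    qed
    ultimately show "Im (n2 + d) = Im n2" by blast
  qed
  define m where "m = n1 + n2"
  have Km: "K (m + m) = K m" "K (Suc m) = K m"
    using Kst[of "n2 + m"] Kst[of n2] Kst[of "Suc n2"] unfolding m_def by (simp_all add: add.assoc)
  have Imm: "Im (m + m) = Im m" "Im (Suc m) = Im m"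
    using Ist[of "n1 + m"] Ist[of n1] Ist[of "Suc n1"] unfolding m_def by (simp_all add: ac_simps)
  have dec: "\<And>x. x \<in> carrier M \<Longrightarrow> \<exists>u\<in>K m. \<exists>v\<in>Im m. x = u \<oplus>\<^bsub>M\<^esub> v"
  proof -
    fix x assume x: "x \<in> carrier M"
    have "(a ^^ m) x \<in> Im m" using x unfolding Im_def by (intro imageI)
    hence "(a ^^ m) x \<in> Im (m + m)" using Imm by simp
    then obtain z where z: "z \<in> carrier M" "(a ^^ m) x = (a ^^ (m + m)) z" unfolding Im_def by blast
    define v where "v = (a ^^ m) z"
    have vc: "v \<in> carrier M" using z apc v_def by simp
    have "v \<in> Im m" unfolding Im_def v_def using z(1) by (intro imageI)
    moreover have "x \<ominus>\<^bsub>M\<^esub> v \<in> K m"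
      unfolding K_def using x vc z lhom_minus[OF M M ap] v_def
      by (simp add: fp_add ag_minus0[OF MG.abelian_group_axioms] apc)
    moreover have "x = (x \<ominus>\<^bsub>M\<^esub> v) \<oplus>\<^bsub>M\<^esub> v" using x vc ag_minus_add[OF MG.abelian_group_axioms] by simp
    ultimately show "\<exists>u\<in>K m. \<exists>v\<in>Im m. x = u \<oplus>\<^bsub>M\<^esub> v" by blast
  qed
  have int: "K m \<inter> Im m = {\<zero>\<^bsub>M\<^esub>}"
  proof
    show "{\<zero>\<^bsub>M\<^esub>} \<subseteq> K m \<inter> Im m" using Ksub Isub unfolding lsubmodule_def by blast
  next
    show "K m \<inter> Im m \<subseteq> {\<zero>\<^bsub>M\<^esub>}"
    proof
      fix y assume y: "y \<in> K m \<inter> Im m"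
      then obtain x where x: "x \<in> carrier M" "y = (a ^^ m) x" unfolding Im_def by blast
      have "(a ^^ m) y = \<zero>\<^bsub>M\<^esub>" using y unfolding K_def by blast
      hence "x \<in> K (m + m)" using x unfolding K_def by (simp add: fp_add)
      hence "x \<in> K m" using Km by simp
      thus "y \<in> {\<zero>\<^bsub>M\<^esub>}" using x unfolding K_def by simp
    qed
  qed
  have "direct_summand R M (K m)"
    unfolding direct_summand_def using Ksub Isub int dec by blast
  hence cases: "K m = {\<zero>\<^bsub>M\<^esub>} \<or> K m = carrier M" using ind unfolding indecomposable_def by blast
  show ?thesis
  proof (cases "K m = carrier M")
    case True
    then show ?thesis unfolding K_def by blast
  next
    case False
    hence K0: "K m = {\<zero>\<^bsub>M\<^esub>}" using cases by blast
    have "inj_on a (carrier M)"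
    proof (rule inj_onI)
      fix x y assume xy: "x \<in> carrier M" "y \<in> carrier M" "a x = a y"
      have ac: "a x \<in> carrier M" "a y \<in> carrier M" using xy lhom_closed[OF a] by blast+
      have "a (x \<ominus>\<^bsub>M\<^esub> y) = \<zero>\<^bsub>M\<^esub>" using xy ac lhom_minus[OF M M a] ag_minus0[OF MG.abelian_group_axioms] by simp
      hence "(a ^^ Suc m) (x \<ominus>\<^bsub>M\<^esub> y) = \<zero>\<^bsub>M\<^esub>" using ap0 by (simp add: funpow_Suc_right del: funpow.simps)
      hence "x \<ominus>\<^bsub>M\<^esub> y \<in> K (Suc m)" using xy unfolding K_def by simp
      hence "x \<ominus>\<^bsub>M\<^esub> y = \<zero>\<^bsub>M\<^esub>" using Km K0 by simp
      thus "x = y" using xy ag_minus0[OF MG.abelian_group_axioms] by simp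
    qed
    moreover have "a ` carrier M = carrier M"
    proof
      show "a ` carrier M \<subseteq> carrier M" using lhom_closed[OF a] by blast
    next
      show "carrier M \<subseteq> a ` carrier M"
      proof
        fix x assume x: "x \<in> carrier M"
        then obtain u v where uv: "u \<in> K m" "v \<in> Im m" "x = u \<oplus>\<^bsub>M\<^esub> v" using dec by blast
        have "u = \<zero>\<^bsub>M\<^esub>" using uv K0 by simp
        hence "x = v" using uv Isub unfolding lsubmodule_def by (metis MG.l_zero subsetD)
        hence "x \<in> Im (Suc m)" using uv Imm by simp
        then obtain z where z: "z \<in> carrier M" "x = (a ^^ Suc m) z" unfolding Im_def by blast
        thus "x \<in> a ` carrier M" using apc by simp
      qed
    qed
    ultimately show ?thesis unfolding bij_betw_def by blast
  qed
qed



lemma local_end: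
  assumes M: "lmodule R M" and fl: "finite_length R M" and ind: "indecomposable R M"
    and a: "lhom R M M a" and nb: "\<not> bij_betw a (carrier M) (carrier M)"
  shows "bij_betw (\<lambda>x. x \<ominus>\<^bsub>M\<^esub> a x) (carrier M) (carrier M)"
proof -
  interpret MG: abelian_group M using M by (rule lmod_ag)
  obtain m where m: "\<And>x. x \<in> carrier M \<Longrightarrow> (a ^^ m) x = \<zero>\<^bsub>M\<^esub>" using fitting[OF M fl ind a] nb by blast
  define b where "b = (\<lambda>x. x \<ominus>\<^bsub>M\<^esub> a x)"
  have b: "lhom R M M b" unfolding b_def by (rule lhom_minusf[OF M lhom_id a])
  have b0: "\<And>x. x \<in> carrier M \<Longrightarrow> b x = \<zero>\<^bsub>M\<^esub> \<Longrightarrow> x = \<zero>\<^bsub>M\<^esub>"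
  proof -
    fix x assume x: "x \<in> carrier M" "b x = \<zero>\<^bsub>M\<^esub>"
    have "a x \<in> carrier M" using lhom_closed[OF a x(1)] .
    hence ax: "a x = x" using x ag_minus0[OF MG.abelian_group_axioms, of x "a x"] unfolding b_def by simp
    have "\<And>k. (a ^^ k) x = x"
    proof -
      fix k show "(a ^^ k) x = x" by (induction k) (simp_all add: ax)
    qed
    thus "x = \<zero>\<^bsub>M\<^esub>" using m x by metis
  qed
  show ?thesis
  proof (rule ccontr)
    assume nb2: "\<not> ?thesis"
    obtain k where k: "\<And>x. x \<in> carrier M \<Longrightarrow> (b ^^ k) x = \<zero>\<^bsub>M\<^esub>" using fitting[OF M fl ind b] nb2 unfolding b_def by blast
    have "\<And>j x. x \<in> carrier M \<Longrightarrow> (b ^^ j) x = \<zero>\<^bsub>M\<^esub> \<Longrightarrow> x = \<zero>\<^bsub>M\<^esub>"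
    proof -
      fix j show "\<And>x. x \<in> carrier M \<Longrightarrow> (b ^^ j) x = \<zero>\<^bsub>M\<^esub> \<Longrightarrow> x = \<zero>\<^bsub>M\<^esub>"
      proof (induction j)
        case 0 then show ?case by simp
      next
        case (Suc j)
        have "(b ^^ j) (b x) = \<zero>\<^bsub>M\<^esub>" using Suc.prems by (simp add: funpow_Suc_right del: funpow.simps)
        moreover have "b x \<in> carrier M" using lhom_closed[OF b Suc.prems(1)] .
        ultimately have "b x = \<zero>\<^bsub>M\<^esub>" using Suc.IH by blast
        thus ?case using b0 Suc.prems by blast
      qed
    qed
    hence "carrier M = {\<zero>\<^bsub>M\<^esub>}" using k by blast
    thus False using ind unfolding indecomposable_def by blast
  qed
qed



lemma fs_ins:
  assumes G: "lmodule R G" and S: "finite S" "s \<notin> S" and f: "\<And>l. l \<in> insert s S \<Longrightarrow> f l \<in> carrier G"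
  shows "finsum G f (insert s S) = f s \<oplus>\<^bsub>G\<^esub> finsum G f S"
proof -
  interpret G: abelian_group G using G by (rule lmod_ag)
  show ?thesis using S f by (intro G.finsum_insert) (auto simp: Pi_def)
qed

lemma fs_closed:
  assumes G: "lmodule R G" and f: "\<And>l. l \<in> S \<Longrightarrow> f l \<in> carrier G"
  shows "finsum G f S \<in> carrier G"
proof -
  interpret G: abelian_group G using G by (rule lmod_ag)
  show ?thesis using f by (intro G.finsum_closed) (auto simp: Pi_def)
qed

lemma fs_add:
  assumes G: "lmodule R G" and f: "\<And>l. l \<in> S \<Longrightarrow> f l \<in> carrier G" and g: "\<And>l. l \<in> S \<Longrightarrow> g l \<in> carrier G"
  shows "finsum G (\<lambda>l. f l \<oplus>\<^bsub>G\<^esub> g l) S = finsum G f S \<oplus>\<^bsub>G\<^esub> finsum G g S"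
proof -
  interpret G: abelian_group G using G by (rule lmod_ag)
  show ?thesis using f g by (intro G.finsum_addf) (auto simp: Pi_def)
qed

lemma fs_cong:
  assumes G: "lmodule R G" and eq: "\<And>l. l \<in> S \<Longrightarrow> f l = g l" and g: "\<And>l. l \<in> S \<Longrightarrow> g l \<in> carrier G"
  shows "finsum G f S = finsum G g S"
proof -
  interpret G: abelian_group G using G by (rule lmod_ag)
  show ?thesis using eq g by (intro G.finsum_cong') (auto simp: Pi_def)
qed

lemma fs_zero:
  assumes G: "lmodule R G" and eq: "\<And>l. l \<in> S \<Longrightarrow> f l = \<zero>\<^bsub>G\<^esub>"
  shows "finsum G f S = \<zero>\<^bsub>G\<^esub>"
proof -
  interpret G: abelian_group G using G by (rule lmod_ag)
  have "finsum G f S = finsum G (\<lambda>l. \<zero>\<^bsub>G\<^esub>) S" by (rule fs_cong[OF G eq]) (simp_all add: G.zero_closed)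
  thus ?thesis by simp
qed

lemma ag_key:
  assumes G: "abelian_group G" and c: "t \<in> carrier G" "P \<in> carrier G" "Xv \<in> carrier G" "s \<in> carrier G" "Q \<in> carrier G" "Y \<in> carrier G"
    and e1: "t \<oplus>\<^bsub>G\<^esub> P = Xv" and e2: "s \<oplus>\<^bsub>G\<^esub> Q = Y" and e3: "t = Y \<ominus>\<^bsub>G\<^esub> s"
  shows "P \<oplus>\<^bsub>G\<^esub> Q = Xv"
proof -
  interpret G: abelian_group G by fact
  have "Q = \<ominus>\<^bsub>G\<^esub> s \<oplus>\<^bsub>G\<^esub> Y" using c e2 G.add.inv_solve_left by blast
  also have "\<dots> = t" using c e3 by (simp add: G.minus_eq G.a_comm)
  finally show ?thesis using e1 c by (simp add: G.a_comm)
qed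

definition goodM :: "('a, 'r) ring_scheme \<Rightarrow> ('i \<Rightarrow> ('a, 'b) module) \<Rightarrow> 'i set \<Rightarrow> bool" where
  "goodM R M J \<longleftrightarrow> (\<forall>j\<in>J. lmodule R (M j) \<and> (\<forall>a. lhom R (M j) (M j) a \<longrightarrow>
     \<not> bij_betw a (carrier (M j)) (carrier (M j)) \<longrightarrow>
     bij_betw (\<lambda>x. x \<ominus>\<^bsub>M j\<^esub> a x) (carrier (M j)) (carrier (M j))))"

definition idem :: "('a, 'r) ring_scheme \<Rightarrow> ('i \<Rightarrow> ('a, 'b) module) \<Rightarrow> 'i set \<Rightarrow> ('i \<Rightarrow> 'i \<Rightarrow> 'b \<Rightarrow> 'b) \<Rightarrow> bool" where
  "idem R M J E \<longleftrightarrow> (\<forall>k\<in>J. \<forall>j\<in>J. lhom R (M j) (M k) (E k j)) \<and>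
     (\<forall>k\<in>J. \<forall>j\<in>J. \<forall>x\<in>carrier (M j). finsum (M k) (\<lambda>l. E k l (E l j x)) J = E k j x)"

definition small :: "('a, 'r) ring_scheme \<Rightarrow> ('i \<Rightarrow> ('a, 'b) module) \<Rightarrow> 'i set \<Rightarrow> ('i \<Rightarrow> 'i \<Rightarrow> 'b \<Rightarrow> 'b) \<Rightarrow> bool" where
  "small R M J E \<longleftrightarrow> (\<forall>i\<in>J. \<forall>\<Phi>. (\<forall>l\<in>J. lhom R (M l) (M i) (\<Phi> l)) \<longrightarrow>
     \<not> bij_betw (\<lambda>x. finsum (M i) (\<lambda>l. \<Phi> l (E l i x)) J) (carrier (M i)) (carrier (M i)))"

definition zeroE :: "('i \<Rightarrow> ('a, 'b) module) \<Rightarrow> 'i set \<Rightarrow> ('i \<Rightarrow> 'i \<Rightarrow> 'b \<Rightarrow> 'b) \<Rightarrow> bool" where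
  "zeroE M J E \<longleftrightarrow> (\<forall>k\<in>J. \<forall>j\<in>J. \<forall>x\<in>carrier (M j). E k j x = \<zero>\<^bsub>M k\<^esub>)"



lemma step:
  assumes fin: "finite J'" and i0: "i0 \<notin> J'"
    and good: "goodM R M (insert i0 J')"
    and IH: "\<And>E'. idem R M J' E' \<Longrightarrow> small R M J' E' \<Longrightarrow> zeroE M J' E'"
    and idE: "idem R M (insert i0 J') E" and smE: "small R M (insert i0 J') E"
  shows "zeroE M (insert i0 J') E"
proof -
  define J where "J = insert i0 J'"
  have finJ: "finite J" using fin J_def by simp
  have i0J: "i0 \<in> J" using J_def by simp
  have J'J: "\<And>l. l \<in> J' \<Longrightarrow> l \<in> J" using J_def by simp
  have Mm: "\<And>j. j \<in> J \<Longrightarrow> lmodule R (M j)" using good J_def unfolding goodM_def by blast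
  have Eh: "\<And>k j. k \<in> J \<Longrightarrow> j \<in> J \<Longrightarrow> lhom R (M j) (M k) (E k j)"
    using idE J_def unfolding idem_def by blast
  have Ec: "\<And>k j x. k \<in> J \<Longrightarrow> j \<in> J \<Longrightarrow> x \<in> carrier (M j) \<Longrightarrow> E k j x \<in> carrier (M k)"
    by (rule lhom_closed[OF Eh])
  have Eid: "\<And>k j x. k \<in> J \<Longrightarrow> j \<in> J \<Longrightarrow> x \<in> carrier (M j) \<Longrightarrow> finsum (M k) (\<lambda>l. E k l (E l j x)) J = E k j x"
    using idE J_def unfolding idem_def by blast
  have Eid': "\<And>k j x. k \<in> J \<Longrightarrow> j \<in> J \<Longrightarrow> x \<in> carrier (M j) \<Longrightarrow>
      E k i0 (E i0 j x) \<oplus>\<^bsub>M k\<^esub> finsum (M k) (\<lambda>l. E k l (E l j x)) J' = E k j x"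
  proof -
    fix k j x assume kjx: "k \<in> J" "j \<in> J" "x \<in> carrier (M j)"
    have "finsum (M k) (\<lambda>l. E k l (E l j x)) J = E k i0 (E i0 j x) \<oplus>\<^bsub>M k\<^esub> finsum (M k) (\<lambda>l. E k l (E l j x)) J'"
      unfolding J_def using Mm[OF kjx(1)] fin i0
    proof (rule fs_ins)
      fix l assume "l \<in> insert i0 J'"
      hence l: "l \<in> J" using J_def by simp
      show "E k l (E l j x) \<in> carrier (M k)" using Ec[OF kjx(1) l] Ec[OF l kjx(2,3)] by blast
    qed
    thus "E k i0 (E i0 j x) \<oplus>\<^bsub>M k\<^esub> finsum (M k) (\<lambda>l. E k l (E l j x)) J' = E k j x" using Eid[OF kjx] by simp
  qed
  define A where "A = E i0 i0"
  have Ah: "lhom R (M i0) (M i0) A" unfolding A_def using Eh[OF i0J i0J] .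
  interpret G0: abelian_group "M i0" using Mm[OF i0J] by (rule lmod_ag)
  have Anb: "\<not> bij_betw A (carrier (M i0)) (carrier (M i0))"
  proof -
    define \<Phi> where "\<Phi> = (\<lambda>l. if l = i0 then (\<lambda>x. x) else (\<lambda>x. \<zero>\<^bsub>M i0\<^esub>))"
    have \<Phi>h: "\<forall>l\<in>J. lhom R (M l) (M i0) (\<Phi> l)"
      unfolding \<Phi>_def by (simp add: lhom_id lhom_zerof[OF Mm[OF i0J]])
    hence nb: "\<not> bij_betw (\<lambda>x. finsum (M i0) (\<lambda>l. \<Phi> l (E l i0 x)) J) (carrier (M i0)) (carrier (M i0))"
      using smE i0J unfolding small_def J_def by blast
    have eq: "\<And>x. x \<in> carrier (M i0) \<Longrightarrow> finsum (M i0) (\<lambda>l. \<Phi> l (E l i0 x)) J = A x"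
    proof -
      fix x assume x: "x \<in> carrier (M i0)"
      have "finsum (M i0) (\<lambda>l. \<Phi> l (E l i0 x)) J = \<Phi> i0 (E i0 i0 x) \<oplus>\<^bsub>M i0\<^esub> finsum (M i0) (\<lambda>l. \<Phi> l (E l i0 x)) J'"
        unfolding J_def using Mm[OF i0J] fin i0
      proof (rule fs_ins)
        fix l assume "l \<in> insert i0 J'"
        hence l: "l \<in> J" using J_def by simp
        show "\<Phi> l (E l i0 x) \<in> carrier (M i0)" using lhom_closed[OF bspec[OF \<Phi>h l] Ec[OF l i0J x]] .
      qed
      also have "finsum (M i0) (\<lambda>l. \<Phi> l (E l i0 x)) J' = \<zero>\<^bsub>M i0\<^esub>"
        using Mm[OF i0J] by (rule fs_zero) (use i0 in \<open>auto simp: \<Phi>_def\<close>)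
      finally show "finsum (M i0) (\<lambda>l. \<Phi> l (E l i0 x)) J = A x"
        using Ec[OF i0J i0J x] by (simp add: \<Phi>_def A_def)
    qed
    show ?thesis using nb bij_betw_cong[of "carrier (M i0)" _ A "carrier (M i0)", OF eq] by simp
  qed
  define B where "B = (\<lambda>x. x \<ominus>\<^bsub>M i0\<^esub> A x)"
  have Bb: "bij_betw B (carrier (M i0)) (carrier (M i0))"
    using good Ah Anb unfolding goodM_def B_def by blast
  have Bh: "lhom R (M i0) (M i0) B" unfolding B_def by (rule lhom_minusf[OF Mm[OF i0J] lhom_id Ah])
  define w where "w = inv_into (carrier (M i0)) B"
  have wh: "lhom R (M i0) (M i0) w" and Bw: "\<And>z. z \<in> carrier (M i0) \<Longrightarrow> B (w z) = z"
    and wB: "\<And>y. y \<in> carrier (M i0) \<Longrightarrow> w (B y) = y"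
    unfolding w_def using lhom_inv[OF Mm[OF i0J] Mm[OF i0J] Bh Bb] by auto
  have wc: "\<And>z. z \<in> carrier (M i0) \<Longrightarrow> w z \<in> carrier (M i0)" using lhom_closed[OF wh] .
  have L: "\<And>k j x y. k \<in> J \<Longrightarrow> j \<in> J \<Longrightarrow> x \<in> carrier (M j) \<Longrightarrow> y \<in> carrier (M i0) \<Longrightarrow> B y = E i0 j x \<Longrightarrow>
      finsum (M k) (\<lambda>l. E k l (E l j x \<oplus>\<^bsub>M l\<^esub> E l i0 y)) J' = E k j x"
  proof -
    fix k j x y assume k: "k \<in> J" and j: "j \<in> J" and x: "x \<in> carrier (M j)" and y: "y \<in> carrier (M i0)"
      and By: "B y = E i0 j x"
    interpret G: abelian_group "M k" using Mm[OF k] by (rule lmod_ag)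
    define P where "P = finsum (M k) (\<lambda>l. E k l (E l j x)) J'"
    define Q where "Q = finsum (M k) (\<lambda>l. E k l (E l i0 y)) J'"
    have c1: "\<And>l. l \<in> J' \<Longrightarrow> E k l (E l j x) \<in> carrier (M k)" using Ec[OF k J'J Ec[OF J'J j x]] .
    have c2: "\<And>l. l \<in> J' \<Longrightarrow> E k l (E l i0 y) \<in> carrier (M k)" using Ec[OF k J'J Ec[OF J'J i0J y]] .
    have "finsum (M k) (\<lambda>l. E k l (E l j x \<oplus>\<^bsub>M l\<^esub> E l i0 y)) J' =
          finsum (M k) (\<lambda>l. E k l (E l j x) \<oplus>\<^bsub>M k\<^esub> E k l (E l i0 y)) J'"
    proof (rule fs_cong[OF Mm[OF k]])
      fix l assume l: "l \<in> J'"
      show "E k l (E l j x \<oplus>\<^bsub>M l\<^esub> E l i0 y) = E k l (E l j x) \<oplus>\<^bsub>M k\<^esub> E k l (E l i0 y)"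
        using lhom_add[OF Eh[OF k J'J[OF l]] Ec[OF J'J[OF l] j x] Ec[OF J'J[OF l] i0J y]] .
      show "E k l (E l j x) \<oplus>\<^bsub>M k\<^esub> E k l (E l i0 y) \<in> carrier (M k)" using c1[OF l] c2[OF l] by simp
    qed
    also have "\<dots> = P \<oplus>\<^bsub>M k\<^esub> Q" unfolding P_def Q_def by (rule fs_add[OF Mm[OF k] c1 c2])
    also have "\<dots> = E k j x"
    proof (rule ag_key[OF G.abelian_group_axioms])
      show "E k i0 (E i0 j x) \<oplus>\<^bsub>M k\<^esub> P = E k j x" unfolding P_def using Eid'[OF k j x] .
      show "E k i0 (A y) \<oplus>\<^bsub>M k\<^esub> Q = E k i0 y" unfolding Q_def A_def using Eid'[OF k i0J y] .
      have "E i0 j x = y \<ominus>\<^bsub>M i0\<^esub> A y" using By B_def by simp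
      thus "E k i0 (E i0 j x) = E k i0 y \<ominus>\<^bsub>M k\<^esub> E k i0 (A y)"
        using lhom_minus[OF Mm[OF i0J] Mm[OF k] Eh[OF k i0J] y lhom_closed[OF Ah y]] by simp
      show "E k i0 (E i0 j x) \<in> carrier (M k)" using Ec[OF k i0J Ec[OF i0J j x]] .
      show "P \<in> carrier (M k)" unfolding P_def by (rule fs_closed[OF Mm[OF k] c1])
      show "E k j x \<in> carrier (M k)" using Ec[OF k j x] .
      show "E k i0 (A y) \<in> carrier (M k)" using Ec[OF k i0J lhom_closed[OF Ah y]] .
      show "Q \<in> carrier (M k)" unfolding Q_def by (rule fs_closed[OF Mm[OF k] c2])
      show "E k i0 y \<in> carrier (M k)" using Ec[OF k i0J y] .
    qed
    finally show "finsum (M k) (\<lambda>l. E k l (E l j x \<oplus>\<^bsub>M l\<^esub> E l i0 y)) J' = E k j x" .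
  qed
  define D where "D k j x = E k j x \<oplus>\<^bsub>M k\<^esub> E k i0 (w (E i0 j x))" for k j x
  have Dh: "\<And>k j. k \<in> J' \<Longrightarrow> j \<in> J' \<Longrightarrow> lhom R (M j) (M k) (D k j)"
  proof -
    fix k j assume k: "k \<in> J'" and j: "j \<in> J'"
    have "lhom R (M j) (M k) (\<lambda>x. E k j x \<oplus>\<^bsub>M k\<^esub> E k i0 (w (E i0 j x)))"
      by (rule lhom_addf[OF Mm[OF J'J[OF k]] Eh[OF J'J[OF k] J'J[OF j]]
            lhom_comp[OF lhom_comp[OF Eh[OF i0J J'J[OF j]] wh] Eh[OF J'J[OF k] i0J]]])
    thus "lhom R (M j) (M k) (D k j)" unfolding D_def .
  qed
  have Dc: "\<And>k j x. k \<in> J' \<Longrightarrow> j \<in> J' \<Longrightarrow> x \<in> carrier (M j) \<Longrightarrow> D k j x \<in> carrier (M k)"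
    by (rule lhom_closed[OF Dh])
  have Lk: "\<And>k j x. k \<in> J \<Longrightarrow> j \<in> J' \<Longrightarrow> x \<in> carrier (M j) \<Longrightarrow>
      finsum (M k) (\<lambda>l. E k l (D l j x)) J' = E k j x"
  proof -
    fix k j x assume k: "k \<in> J" and j: "j \<in> J'" and x: "x \<in> carrier (M j)"
    have y: "w (E i0 j x) \<in> carrier (M i0)" using wc Ec[OF i0J J'J[OF j] x] by blast
    have "B (w (E i0 j x)) = E i0 j x" using Bw Ec[OF i0J J'J[OF j] x] by blast
    from L[OF k J'J[OF j] x y this] show "finsum (M k) (\<lambda>l. E k l (D l j x)) J' = E k j x"
      unfolding D_def .
  qed
  have Didem: "idem R M J' D"
    unfolding idem_def
  proof (intro conjI ballI)
    fix k j assume "k \<in> J'" "j \<in> J'" thus "lhom R (M j) (M k) (D k j)" by (rule Dh)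
  next
    fix k j x assume k: "k \<in> J'" and j: "j \<in> J'" and x: "x \<in> carrier (M j)"
    have c1: "\<And>l. l \<in> J' \<Longrightarrow> E k l (D l j x) \<in> carrier (M k)" using Ec[OF J'J[OF k] J'J Dc[OF _ j x]] .
    have c3: "\<And>l. l \<in> J' \<Longrightarrow> E i0 l (D l j x) \<in> carrier (M i0)" using Ec[OF i0J J'J Dc[OF _ j x]] .
    have c2: "\<And>l. l \<in> J' \<Longrightarrow> E k i0 (w (E i0 l (D l j x))) \<in> carrier (M k)"
      using Ec[OF J'J[OF k] i0J wc[OF c3]] .
    have hk: "lhom R (M i0) (M k) (\<lambda>z. E k i0 (w z))" by (rule lhom_comp[OF wh Eh[OF J'J[OF k] i0J]])
    have "finsum (M k) (\<lambda>l. D k l (D l j x)) J' =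
          finsum (M k) (\<lambda>l. E k l (D l j x) \<oplus>\<^bsub>M k\<^esub> E k i0 (w (E i0 l (D l j x)))) J'"
      unfolding D_def[of k] by simp
    also have "\<dots> = finsum (M k) (\<lambda>l. E k l (D l j x)) J' \<oplus>\<^bsub>M k\<^esub> finsum (M k) (\<lambda>l. E k i0 (w (E i0 l (D l j x)))) J'"
      by (rule fs_add[OF Mm[OF J'J[OF k]] c1 c2])
    also have "finsum (M k) (\<lambda>l. E k i0 (w (E i0 l (D l j x)))) J' = E k i0 (w (finsum (M i0) (\<lambda>l. E i0 l (D l j x)) J'))"
      by (rule lhom_finsum[OF Mm[OF i0J] Mm[OF J'J[OF k]] hk fin c3, symmetric])
    also have "finsum (M i0) (\<lambda>l. E i0 l (D l j x)) J' = E i0 j x" by (rule Lk[OF i0J j x])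
    also have "finsum (M k) (\<lambda>l. E k l (D l j x)) J' = E k j x" by (rule Lk[OF J'J[OF k] j x])
    finally show "finsum (M k) (\<lambda>l. D k l (D l j x)) J' = D k j x" unfolding D_def .
  qed
  have Dsmall: "small R M J' D"
    unfolding small_def
  proof (intro ballI allI impI)
    fix i \<Phi>' assume i: "i \<in> J'" and \<Phi>'h: "\<forall>l\<in>J'. lhom R (M l) (M i) (\<Phi>' l)"
    have iJ: "i \<in> J" using J'J[OF i] .
    have \<Phi>'h': "\<And>l. l \<in> J' \<Longrightarrow> lhom R (M l) (M i) (\<Phi>' l)" using \<Phi>'h by blast
    define \<Phi> where "\<Phi> = (\<lambda>l. if l = i0 then (\<lambda>z. finsum (M i) (\<lambda>l'. \<Phi>' l' (E l' i0 (w z))) J') else \<Phi>' l)"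
    have h0: "lhom R (M i0) (M i) (\<lambda>z. finsum (M i) (\<lambda>l'. \<Phi>' l' (E l' i0 (w z))) J')"
    proof (rule lhom_finsumf[OF Mm[OF i0J] Mm[OF iJ] fin])
      fix l' assume l': "l' \<in> J'"
      show "lhom R (M i0) (M i) (\<lambda>z. \<Phi>' l' (E l' i0 (w z)))"
        by (rule lhom_comp[OF lhom_comp[OF wh Eh[OF J'J[OF l'] i0J]] \<Phi>'h'[OF l']])
    qed
    have \<Phi>h: "\<forall>l\<in>J. lhom R (M l) (M i) (\<Phi> l)"
    proof
      fix l assume l: "l \<in> J"
      show "lhom R (M l) (M i) (\<Phi> l)"
      proof (cases "l = i0")
        case True then show ?thesis using h0 \<Phi>_def by simp
      next
        case False then show ?thesis using \<Phi>'h' l J_def \<Phi>_def by simp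
      qed
    qed
    hence nb: "\<not> bij_betw (\<lambda>x. finsum (M i) (\<lambda>l. \<Phi> l (E l i x)) J) (carrier (M i)) (carrier (M i))"
      using smE iJ unfolding small_def J_def by blast
    have eq: "\<And>x. x \<in> carrier (M i) \<Longrightarrow> finsum (M i) (\<lambda>l. \<Phi> l (E l i x)) J = finsum (M i) (\<lambda>l. \<Phi>' l (D l i x)) J'"
    proof -
      fix x assume x: "x \<in> carrier (M i)"
      interpret Gi: abelian_group "M i" using Mm[OF iJ] by (rule lmod_ag)
      define y where "y = w (E i0 i x)"
      have y: "y \<in> carrier (M i0)" unfolding y_def using wc Ec[OF i0J iJ x] by blast
      have c1: "\<And>l. l \<in> J' \<Longrightarrow> \<Phi>' l (E l i x) \<in> carrier (M i)"
        using lhom_closed[OF \<Phi>'h' Ec[OF J'J iJ x]] .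
      have c2: "\<And>l. l \<in> J' \<Longrightarrow> \<Phi>' l (E l i0 y) \<in> carrier (M i)"
        using lhom_closed[OF \<Phi>'h' Ec[OF J'J i0J y]] .
      have "finsum (M i) (\<lambda>l. \<Phi> l (E l i x)) J = \<Phi> i0 (E i0 i x) \<oplus>\<^bsub>M i\<^esub> finsum (M i) (\<lambda>l. \<Phi> l (E l i x)) J'"
        unfolding J_def using Mm[OF iJ] fin i0
      proof (rule fs_ins)
        fix l assume "l \<in> insert i0 J'"
        hence l: "l \<in> J" using J_def by simp
        show "\<Phi> l (E l i x) \<in> carrier (M i)" using lhom_closed[OF bspec[OF \<Phi>h l] Ec[OF l iJ x]] .
      qed
      also have "finsum (M i) (\<lambda>l. \<Phi> l (E l i x)) J' = finsum (M i) (\<lambda>l. \<Phi>' l (E l i x)) J'"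
        by (rule fs_cong[OF Mm[OF iJ]]) (use i0 c1 in \<open>auto simp: \<Phi>_def\<close>)
      also have "\<Phi> i0 (E i0 i x) = finsum (M i) (\<lambda>l. \<Phi>' l (E l i0 y)) J'" unfolding \<Phi>_def y_def by simp
      also have "finsum (M i) (\<lambda>l. \<Phi>' l (E l i0 y)) J' \<oplus>\<^bsub>M i\<^esub> finsum (M i) (\<lambda>l. \<Phi>' l (E l i x)) J'
          = finsum (M i) (\<lambda>l. \<Phi>' l (E l i x)) J' \<oplus>\<^bsub>M i\<^esub> finsum (M i) (\<lambda>l. \<Phi>' l (E l i0 y)) J'"
      proof -
        have "finsum (M i) (\<lambda>l. \<Phi>' l (E l i0 y)) J' \<in> carrier (M i)" by (rule fs_closed[OF Mm[OF iJ]]) (rule c2)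
        moreover have "finsum (M i) (\<lambda>l. \<Phi>' l (E l i x)) J' \<in> carrier (M i)" by (rule fs_closed[OF Mm[OF iJ]]) (rule c1)
        ultimately show ?thesis by (rule Gi.a_comm)
      qed
      also have "\<dots> = finsum (M i) (\<lambda>l. \<Phi>' l (E l i x) \<oplus>\<^bsub>M i\<^esub> \<Phi>' l (E l i0 y)) J'"
        by (rule fs_add[OF Mm[OF iJ] c1 c2, symmetric])
      also have "\<dots> = finsum (M i) (\<lambda>l. \<Phi>' l (D l i x)) J'"
      proof (rule fs_cong[OF Mm[OF iJ]])
        fix l assume l: "l \<in> J'"
        show "\<Phi>' l (E l i x) \<oplus>\<^bsub>M i\<^esub> \<Phi>' l (E l i0 y) = \<Phi>' l (D l i x)"
          unfolding D_def y_def[symmetric]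
          using lhom_add[OF \<Phi>'h'[OF l] Ec[OF J'J[OF l] iJ x] Ec[OF J'J[OF l] i0J y]] by simp
        show "\<Phi>' l (D l i x) \<in> carrier (M i)" using lhom_closed[OF \<Phi>'h'[OF l] Dc[OF l i x]] .
      qed
      finally show "finsum (M i) (\<lambda>l. \<Phi> l (E l i x)) J = finsum (M i) (\<lambda>l. \<Phi>' l (D l i x)) J'" .
    qed
    show "\<not> bij_betw (\<lambda>x. finsum (M i) (\<lambda>l. \<Phi>' l (D l i x)) J') (carrier (M i)) (carrier (M i))"
      using nb bij_betw_cong[of "carrier (M i)" _ _ "carrier (M i)", OF eq] by simp
  qed
  have D0: "\<And>k j x. k \<in> J' \<Longrightarrow> j \<in> J' \<Longrightarrow> x \<in> carrier (M j) \<Longrightarrow> D k j x = \<zero>\<^bsub>M k\<^esub>"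
    using IH[OF Didem Dsmall] unfolding zeroE_def by blast
  have Z1: "\<And>k j x. k \<in> J \<Longrightarrow> j \<in> J' \<Longrightarrow> x \<in> carrier (M j) \<Longrightarrow> E k j x = \<zero>\<^bsub>M k\<^esub>"
  proof -
    fix k j x assume k: "k \<in> J" and j: "j \<in> J'" and x: "x \<in> carrier (M j)"
    have "E k j x = finsum (M k) (\<lambda>l. E k l (D l j x)) J'" using Lk[OF k j x] by simp
    also have "\<dots> = \<zero>\<^bsub>M k\<^esub>"
    proof (rule fs_zero[OF Mm[OF k]])
      fix l assume l: "l \<in> J'"
      show "E k l (D l j x) = \<zero>\<^bsub>M k\<^esub>" using D0[OF l j x] lhom_zero[OF Mm[OF J'J[OF l]] Mm[OF k] Eh[OF k J'J[OF l]]] by simp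
    qed
    finally show "E k j x = \<zero>\<^bsub>M k\<^esub>" .
  qed
  have Z2: "\<And>k x. k \<in> J \<Longrightarrow> x \<in> carrier (M i0) \<Longrightarrow> E k i0 x = \<zero>\<^bsub>M k\<^esub>"
  proof -
    fix k x assume k: "k \<in> J" and x: "x \<in> carrier (M i0)"
    interpret G: abelian_group "M k" using Mm[OF k] by (rule lmod_ag)
    have EB: "\<And>z. z \<in> carrier (M i0) \<Longrightarrow> E k i0 (B z) = \<zero>\<^bsub>M k\<^esub>"
    proof -
      fix z assume z: "z \<in> carrier (M i0)"
      have "finsum (M k) (\<lambda>l. E k l (E l i0 z)) J' = \<zero>\<^bsub>M k\<^esub>"
        by (rule fs_zero[OF Mm[OF k]]) (rule Z1[OF k _ Ec[OF J'J i0J z]])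
      hence "E k i0 (A z) = E k i0 z" using Eid'[OF k i0J z] Ec[OF k i0J lhom_closed[OF Ah z]] A_def by simp
      thus "E k i0 (B z) = \<zero>\<^bsub>M k\<^esub>" unfolding B_def
        using lhom_minus[OF Mm[OF i0J] Mm[OF k] Eh[OF k i0J] z lhom_closed[OF Ah z]]
          ag_minus0[OF G.abelian_group_axioms Ec[OF k i0J z] Ec[OF k i0J lhom_closed[OF Ah z]]] by simp
    qed
    have "x = B (w x)" using Bw[OF x] by simp
    thus "E k i0 x = \<zero>\<^bsub>M k\<^esub>" using EB[OF wc[OF x]] by simp
  qed
  show ?thesis unfolding zeroE_def J_def[symmetric]
  proof (intro ballI)
    fix k j x assume k: "k \<in> J" and j: "j \<in> J" and x: "x \<in> carrier (M j)"
    show "E k j x = \<zero>\<^bsub>M k\<^esub>"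
    proof (cases "j = i0")
      case True then show ?thesis using Z2 k x by simp
    next
      case False then show ?thesis using Z1 k x j J_def by simp
    qed
  qed
qed

lemma claim:
  assumes "finite J"
  shows "goodM R M J \<Longrightarrow> idem R M J E \<Longrightarrow> small R M J E \<Longrightarrow> zeroE M J E"
  using assms
proof (induction J arbitrary: E rule: finite_induct)
  case empty
  then show ?case by (simp add: zeroE_def)
next
  case (insert i0 J')
  have "goodM R M J'" using insert.prems(1) unfolding goodM_def by blast
  hence IH: "\<And>E'. idem R M J' E' \<Longrightarrow> small R M J' E' \<Longrightarrow> zeroE M J' E'" using insert.IH insert.hyps by blast
  show ?case by (rule step[OF insert.hyps(1,2) insert.prems(1) IH insert.prems(2,3)])
qed



lemma dsum_carrier: "f \<in> carrier (dsum M J) \<longleftrightarrow> (\<forall>j\<in>J. f j \<in> carrier (M j)) \<and> (\<forall>j. j \<notin> J \<longrightarrow> f j = undefined)"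
  by (simp add: dsum_def)
lemma dsum_add: "f \<oplus>\<^bsub>dsum M J\<^esub> h = (\<lambda>j\<in>J. f j \<oplus>\<^bsub>M j\<^esub> h j)"
  by (simp add: dsum_def)
lemma dsum_zero: "\<zero>\<^bsub>dsum M J\<^esub> = (\<lambda>j\<in>J. \<zero>\<^bsub>M j\<^esub>)"
  by (simp add: dsum_def)
lemma dsum_smult: "a \<odot>\<^bsub>dsum M J\<^esub> f = (\<lambda>j\<in>J. a \<odot>\<^bsub>M j\<^esub> f j)"
  by (simp add: dsum_def)

lemma dsum_eqI: "f \<in> carrier (dsum M J) \<Longrightarrow> h \<in> carrier (dsum M J) \<Longrightarrow> (\<And>j. j \<in> J \<Longrightarrow> f j = h j) \<Longrightarrow> f = h"
  by (rule ext) (metis dsum_carrier)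

lemma dsum_ag:
  assumes ag: "\<And>j. j \<in> J \<Longrightarrow> abelian_group (M j)"
  shows "abelian_group (dsum M J)"
proof (rule abelian_groupI)
  note E = abelian_groupE[OF ag]
  fix x y assume xy: "x \<in> carrier (dsum M J)" "y \<in> carrier (dsum M J)"
  show "x \<oplus>\<^bsub>dsum M J\<^esub> y \<in> carrier (dsum M J)" using xy E(1) by (simp add: dsum_carrier dsum_add)
  show "x \<oplus>\<^bsub>dsum M J\<^esub> y = y \<oplus>\<^bsub>dsum M J\<^esub> x" using xy E(4) by (auto simp: dsum_carrier dsum_add)
next
  note E = abelian_groupE[OF ag]
  show "\<zero>\<^bsub>dsum M J\<^esub> \<in> carrier (dsum M J)" using E(2) by (simp add: dsum_carrier dsum_zero)
next
  note E = abelian_groupE[OF ag]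
  fix x y z assume xyz: "x \<in> carrier (dsum M J)" "y \<in> carrier (dsum M J)" "z \<in> carrier (dsum M J)"
  show "x \<oplus>\<^bsub>dsum M J\<^esub> y \<oplus>\<^bsub>dsum M J\<^esub> z = x \<oplus>\<^bsub>dsum M J\<^esub> (y \<oplus>\<^bsub>dsum M J\<^esub> z)"
    using xyz E(3) by (auto simp: dsum_carrier dsum_add)
next
  note E = abelian_groupE[OF ag]
  fix x assume x: "x \<in> carrier (dsum M J)"
  show "\<zero>\<^bsub>dsum M J\<^esub> \<oplus>\<^bsub>dsum M J\<^esub> x = x"
    by (rule dsum_eqI) (use x E(1,2,5) in \<open>auto simp: dsum_carrier dsum_add dsum_zero\<close>)
next
  fix x assume x: "x \<in> carrier (dsum M J)"
  have "(\<lambda>j\<in>J. \<ominus>\<^bsub>M j\<^esub> x j) \<in> carrier (dsum M J)"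
    using x ag by (simp add: dsum_carrier abelian_group.a_inv_closed)
  moreover have "(\<lambda>j\<in>J. \<ominus>\<^bsub>M j\<^esub> x j) \<oplus>\<^bsub>dsum M J\<^esub> x = \<zero>\<^bsub>dsum M J\<^esub>"
    unfolding dsum_add dsum_zero by (rule restrict_ext) (use x ag in \<open>simp add: dsum_carrier abelian_group.l_neg\<close>)
  ultimately show "\<exists>y\<in>carrier (dsum M J). y \<oplus>\<^bsub>dsum M J\<^esub> x = \<zero>\<^bsub>dsum M J\<^esub>" by blast
qed

lemma dsum_neg:
  assumes ag: "\<And>j. j \<in> J \<Longrightarrow> abelian_group (M j)" and x: "x \<in> carrier (dsum M J)"
  shows "\<ominus>\<^bsub>dsum M J\<^esub> x = (\<lambda>j\<in>J. \<ominus>\<^bsub>M j\<^esub> x j)"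
proof -
  interpret DS: abelian_group "dsum M J" using ag by (rule dsum_ag)
  have "(\<lambda>j\<in>J. \<ominus>\<^bsub>M j\<^esub> x j) \<in> carrier (dsum M J)"
    using x ag by (simp add: dsum_carrier abelian_group.a_inv_closed)
  moreover have "(\<lambda>j\<in>J. \<ominus>\<^bsub>M j\<^esub> x j) \<oplus>\<^bsub>dsum M J\<^esub> x = \<zero>\<^bsub>dsum M J\<^esub>"
    unfolding dsum_add dsum_zero by (rule restrict_ext) (use x ag in \<open>simp add: dsum_carrier abelian_group.l_neg\<close>)
  ultimately show ?thesis by (intro DS.minus_equality x)
qed

definition inj_dsum :: "('i \<Rightarrow> ('a, 'b) module) \<Rightarrow> 'i set \<Rightarrow> 'i \<Rightarrow> 'b \<Rightarrow> ('i \<Rightarrow> 'b)" where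
  "inj_dsum M J j x = (\<lambda>l\<in>J. if l = j then x else \<zero>\<^bsub>M l\<^esub>)"

definition cut_dsum :: "('i \<Rightarrow> ('a, 'b) module) \<Rightarrow> 'i set \<Rightarrow> 'i set \<Rightarrow> ('i \<Rightarrow> 'b) \<Rightarrow> ('i \<Rightarrow> 'b)" where
  "cut_dsum M J S m = (\<lambda>l\<in>J. if l \<in> S then m l else \<zero>\<^bsub>M l\<^esub>)"

lemma cut_lemma:
  assumes ag: "\<And>j. j \<in> J \<Longrightarrow> abelian_group (M j)" and G: "lmodule R G"
    and fc: "\<And>m. m \<in> carrier (dsum M J) \<Longrightarrow> f m \<in> carrier G"
    and fa: "\<And>m m'. m \<in> carrier (dsum M J) \<Longrightarrow> m' \<in> carrier (dsum M J) \<Longrightarrow> f (m \<oplus>\<^bsub>dsum M J\<^esub> m') = f m \<oplus>\<^bsub>G\<^esub> f m'"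
    and m: "m \<in> carrier (dsum M J)" and S: "finite S" "S \<subseteq> J"
  shows "f (cut_dsum M J S m) = finsum G (\<lambda>l. f (inj_dsum M J l (m l))) S"
  using S
proof (induction S rule: finite_induct)
  case empty
  have DSag: "abelian_group (dsum M J)" by (rule dsum_ag) (rule ag)
  have "cut_dsum M J {} m = \<zero>\<^bsub>dsum M J\<^esub>" by (simp add: cut_dsum_def dsum_zero)
  moreover have "f \<zero>\<^bsub>dsum M J\<^esub> = \<zero>\<^bsub>G\<^esub>"
    proof (rule add_map_zero[where f=f])
    show "abelian_group (dsum M J)" by (rule DSag)
    show "abelian_group G" by (rule lmod_ag[OF G])
    show "\<And>x. x \<in> carrier (dsum M J) \<Longrightarrow> f x \<in> carrier G" by (rule fc)
    show "\<And>x y. x \<in> carrier (dsum M J) \<Longrightarrow> y \<in> carrier (dsum M J) \<Longrightarrow> f (x \<oplus>\<^bsub>dsum M J\<^esub> y) = f x \<oplus>\<^bsub>G\<^esub> f y" by (rule fa)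
  qed
  moreover have "finsum G (\<lambda>l. f (inj_dsum M J l (m l))) {} = \<zero>\<^bsub>G\<^esub>" by (rule fs_zero[OF G]) simp
  ultimately show ?case by simp
next
  case (insert s S)
  have injc: "\<And>l. l \<in> J \<Longrightarrow> inj_dsum M J l (m l) \<in> carrier (dsum M J)"
    using m ag by (auto simp: inj_dsum_def dsum_carrier abelian_group.axioms(1) abelian_monoid.zero_closed)
  have cutc: "cut_dsum M J S m \<in> carrier (dsum M J)"
    using m ag by (auto simp: cut_dsum_def dsum_carrier abelian_group.axioms(1) abelian_monoid.zero_closed)
  have sJ: "s \<in> J" using insert by simp
  have "cut_dsum M J (insert s S) m = inj_dsum M J s (m s) \<oplus>\<^bsub>dsum M J\<^esub> cut_dsum M J S m"
    using insert.hyps m ag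
    by (auto simp: cut_dsum_def inj_dsum_def dsum_add dsum_carrier abelian_group.axioms(1)
        abelian_monoid.l_zero abelian_monoid.r_zero abelian_monoid.zero_closed intro!: ext)
  hence "f (cut_dsum M J (insert s S) m) = f (inj_dsum M J s (m s)) \<oplus>\<^bsub>G\<^esub> f (cut_dsum M J S m)"
    using fa[OF injc[OF sJ] cutc] by simp
  also have "\<dots> = finsum G (\<lambda>l. f (inj_dsum M J l (m l))) (insert s S)"
    using insert injc fc by (subst fs_ins[OF G]) auto
  finally show ?case .
qed

lemma cut_all: "m \<in> carrier (dsum M J) \<Longrightarrow> cut_dsum M J J m = m"
  by (rule ext) (auto simp: cut_dsum_def dsum_carrier)



lemma ag_neg0: "abelian_group G \<Longrightarrow> \<ominus>\<^bsub>G\<^esub> \<zero>\<^bsub>G\<^esub> = \<zero>\<^bsub>G\<^esub>"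
proof -
  assume G: "abelian_group G"
  interpret G: abelian_group G by fact
  show ?thesis by (rule G.minus_equality) simp_all
qed

lemma easy:
  fixes R :: "'a ring" and Xm :: "('a, 'c) module" and M :: "'i \<Rightarrow> ('a, 'b) module"
    and g :: "'i \<Rightarrow> 'c \<Rightarrow> 'b" and I :: "'i set"
  assumes Mi: "\<forall>i\<in>I. lmodule R (M i)"
    and gh: "\<forall>i\<in>I. lhom R Xm (M i) (g i)"
    and nz: "\<forall>i\<in>I. \<exists>x\<in>carrier Xm. g i x \<noteq> \<zero>\<^bsub>M i\<^esub>"
    and i: "i \<in> I" and ins: "in_sum_others R Xm M g I i"
  shows "\<not> fork R Xm M g I"
proof -
  obtain F p where F: "finite F" "F \<subseteq> I - {i}" and ph: "\<forall>j\<in>F. lhom R (M j) (M i) (p j)"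
    and geq: "\<forall>x\<in>carrier Xm. g i x = finsum (M i) (\<lambda>j. p j (g j x)) F"
    using ins unfolding in_sum_others_def by blast
  define J where "J = insert i F"
  have finJ: "finite J" using F J_def by simp
  have JI: "J \<subseteq> I" using F i J_def by auto
  have iF: "i \<notin> F" using F by blast
  have FJ: "\<And>j. j \<in> F \<Longrightarrow> j \<in> J" using J_def by simp
  have iJ: "i \<in> J" using J_def by simp
  have Mm: "\<And>j. j \<in> J \<Longrightarrow> lmodule R (M j)" using Mi JI by blast
  have ag: "\<And>j. j \<in> J \<Longrightarrow> abelian_group (M j)" using Mm lmod_ag by blast
  have ph': "\<And>j. j \<in> F \<Longrightarrow> lhom R (M j) (M i) (p j)" using ph by blast
  interpret DS: abelian_group "dsum M J" by (rule dsum_ag) (rule ag)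
  interpret Gi: abelian_group "M i" by (rule ag[OF iJ])
  have zc: "\<And>j. j \<in> J \<Longrightarrow> \<zero>\<^bsub>M j\<^esub> \<in> carrier (M j)" using ag by (simp add: abelian_group.axioms(1) abelian_monoid.zero_closed)
  have p0: "\<And>j. j \<in> F \<Longrightarrow> p j \<zero>\<^bsub>M j\<^esub> = \<zero>\<^bsub>M i\<^esub>" using lhom_zero[OF Mm[OF FJ] Mm[OF iJ] ph'] by blast
  define S where "S f = finsum (M i) (\<lambda>j. p j (f j)) F" for f
  have Sc: "\<And>f. f \<in> carrier (dsum M J) \<Longrightarrow> S f \<in> carrier (M i)"
    unfolding S_def by (rule fs_closed[OF Mm[OF iJ]]) (auto simp: dsum_carrier intro!: lhom_closed[OF ph'] FJ)
  have S0: "\<And>f. (\<And>j. j \<in> F \<Longrightarrow> f j = \<zero>\<^bsub>M j\<^esub>) \<Longrightarrow> S f = \<zero>\<^bsub>M i\<^esub>"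
    unfolding S_def by (rule fs_zero[OF Mm[OF iJ]]) (simp add: p0)
  define U where "U = {f \<in> carrier (dsum M J). f i = S f}"
  define V where "V = {f \<in> carrier (dsum M J). \<forall>j\<in>F. f j = \<zero>\<^bsub>M j\<^esub>}"
  have pc: "\<And>f j. f \<in> carrier (dsum M J) \<Longrightarrow> j \<in> F \<Longrightarrow> p j (f j) \<in> carrier (M i)"
    by (auto simp: dsum_carrier intro!: lhom_closed[OF ph'] FJ)
  have Uadd: "\<And>f h. f \<in> U \<Longrightarrow> h \<in> U \<Longrightarrow> f \<oplus>\<^bsub>dsum M J\<^esub> h \<in> U"
  proof -
    fix f h assume f: "f \<in> U" and h: "h \<in> U"
    have fc: "f \<in> carrier (dsum M J)" and hc: "h \<in> carrier (dsum M J)" using f h U_def by auto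
    have "S (f \<oplus>\<^bsub>dsum M J\<^esub> h) = finsum (M i) (\<lambda>j. p j (f j) \<oplus>\<^bsub>M i\<^esub> p j (h j)) F"
      unfolding S_def
    proof (rule fs_cong[OF Mm[OF iJ]])
      fix j assume j: "j \<in> F"
      show "p j ((f \<oplus>\<^bsub>dsum M J\<^esub> h) j) = p j (f j) \<oplus>\<^bsub>M i\<^esub> p j (h j)"
        using fc hc j FJ[OF j] by (simp add: dsum_add dsum_carrier lhom_add[OF ph'[OF j]])
      show "p j (f j) \<oplus>\<^bsub>M i\<^esub> p j (h j) \<in> carrier (M i)" using pc[OF fc j] pc[OF hc j] by simp
    qed
    also have "\<dots> = S f \<oplus>\<^bsub>M i\<^esub> S h" unfolding S_def by (rule fs_add[OF Mm[OF iJ]]) (simp_all add: pc fc hc)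
    moreover have "(f \<oplus>\<^bsub>dsum M J\<^esub> h) i = f i \<oplus>\<^bsub>M i\<^esub> h i" using iJ by (simp add: dsum_add)
    moreover have "f \<oplus>\<^bsub>dsum M J\<^esub> h \<in> carrier (dsum M J)" using fc hc by simp
    ultimately show "f \<oplus>\<^bsub>dsum M J\<^esub> h \<in> U" using f h unfolding U_def by simp
  qed
  have Uneg: "\<And>f. f \<in> U \<Longrightarrow> \<ominus>\<^bsub>dsum M J\<^esub> f \<in> U"
  proof -
    fix f assume f: "f \<in> U"
    have fc: "f \<in> carrier (dsum M J)" using f U_def by auto
    have ng: "lhom R (M i) (M i) (\<lambda>x. \<ominus>\<^bsub>M i\<^esub> x)" by (rule lhom_negf[OF Mm[OF iJ] lhom_id])
    have "S (\<ominus>\<^bsub>dsum M J\<^esub> f) = finsum (M i) (\<lambda>j. \<ominus>\<^bsub>M i\<^esub> p j (f j)) F"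
      unfolding S_def
    proof (rule fs_cong[OF Mm[OF iJ]])
      fix j assume j: "j \<in> F"
      show "p j ((\<ominus>\<^bsub>dsum M J\<^esub> f) j) = \<ominus>\<^bsub>M i\<^esub> p j (f j)"
        using fc j FJ[OF j] dsum_neg[OF ag fc] lhom_neg[OF Mm[OF FJ[OF j]] Mm[OF iJ] ph'[OF j]]
        by (simp add: dsum_carrier)
      show "\<ominus>\<^bsub>M i\<^esub> p j (f j) \<in> carrier (M i)" using pc[OF fc j] by simp
    qed
    also have "\<dots> = \<ominus>\<^bsub>M i\<^esub> S f" unfolding S_def
      by (rule lhom_finsum[OF Mm[OF iJ] Mm[OF iJ] ng F(1), symmetric]) (rule pc[OF fc])
    finally have "S (\<ominus>\<^bsub>dsum M J\<^esub> f) = \<ominus>\<^bsub>M i\<^esub> S f" .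
    moreover have "(\<ominus>\<^bsub>dsum M J\<^esub> f) i = \<ominus>\<^bsub>M i\<^esub> f i" using iJ dsum_neg[OF ag fc] by simp
    moreover have "\<ominus>\<^bsub>dsum M J\<^esub> f \<in> carrier (dsum M J)" using fc by simp
    ultimately show "\<ominus>\<^bsub>dsum M J\<^esub> f \<in> U" using f unfolding U_def by simp
  qed
  have Usm: "\<And>a f. a \<in> carrier R \<Longrightarrow> f \<in> U \<Longrightarrow> a \<odot>\<^bsub>dsum M J\<^esub> f \<in> U"
  proof -
    fix a f assume a: "a \<in> carrier R" and f: "f \<in> U"
    have fc: "f \<in> carrier (dsum M J)" using f U_def by auto
    have smc: "a \<odot>\<^bsub>dsum M J\<^esub> f \<in> carrier (dsum M J)"
      using fc a Mm by (auto simp: dsum_carrier dsum_smult intro!: lmod_smult_closed)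
    have "S (a \<odot>\<^bsub>dsum M J\<^esub> f) = finsum (M i) (\<lambda>j. a \<odot>\<^bsub>M i\<^esub> p j (f j)) F"
      unfolding S_def
    proof (rule fs_cong[OF Mm[OF iJ]])
      fix j assume j: "j \<in> F"
      show "p j ((a \<odot>\<^bsub>dsum M J\<^esub> f) j) = a \<odot>\<^bsub>M i\<^esub> p j (f j)"
        using fc j FJ[OF j] a lhom_smult[OF ph'[OF j] a] by (simp add: dsum_carrier dsum_smult)
      show "a \<odot>\<^bsub>M i\<^esub> p j (f j) \<in> carrier (M i)" using pc[OF fc j] a lmod_smult_closed[OF Mm[OF iJ]] by simp
    qed
    also have "\<dots> = a \<odot>\<^bsub>M i\<^esub> S f" unfolding S_def
      by (rule lmod_smult_finsum[OF Mm[OF iJ] a F(1), symmetric]) (rule pc[OF fc])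
    finally have "S (a \<odot>\<^bsub>dsum M J\<^esub> f) = a \<odot>\<^bsub>M i\<^esub> S f" .
    moreover have "(a \<odot>\<^bsub>dsum M J\<^esub> f) i = a \<odot>\<^bsub>M i\<^esub> f i" using iJ by (simp add: dsum_smult)
    ultimately show "a \<odot>\<^bsub>dsum M J\<^esub> f \<in> U" using f smc unfolding U_def by simp
  qed
  have z0: "\<zero>\<^bsub>dsum M J\<^esub> \<in> U"
  proof -
    have "S \<zero>\<^bsub>dsum M J\<^esub> = \<zero>\<^bsub>M i\<^esub>" by (rule S0) (simp add: dsum_zero FJ)
    thus ?thesis unfolding U_def using iJ DS.zero_closed by (simp add: dsum_zero)
  qed
  have Usub: "lsubmodule R (dsum M J) U"
    unfolding lsubmodule_def using z0 Uadd Uneg Usm U_def by blast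
  have Vsub: "lsubmodule R (dsum M J) V"
    unfolding lsubmodule_def V_def
  proof (intro conjI ballI)
    show "\<zero>\<^bsub>dsum M J\<^esub> \<in> {f \<in> carrier (dsum M J). \<forall>j\<in>F. f j = \<zero>\<^bsub>M j\<^esub>}" using DS.zero_closed by (simp add: dsum_zero FJ)
  next
    fix f h assume f: "f \<in> {f \<in> carrier (dsum M J). \<forall>j\<in>F. f j = \<zero>\<^bsub>M j\<^esub>}" and h: "h \<in> {f \<in> carrier (dsum M J). \<forall>j\<in>F. f j = \<zero>\<^bsub>M j\<^esub>}"
    show "f \<oplus>\<^bsub>dsum M J\<^esub> h \<in> {f \<in> carrier (dsum M J). \<forall>j\<in>F. f j = \<zero>\<^bsub>M j\<^esub>}"
      using f h DS.a_closed[of f h] ag FJ by (simp add: dsum_add abelian_group.axioms(1) abelian_monoid.l_zero abelian_monoid.zero_closed)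
  next
    fix f assume f: "f \<in> {f \<in> carrier (dsum M J). \<forall>j\<in>F. f j = \<zero>\<^bsub>M j\<^esub>}"
    show "\<ominus>\<^bsub>dsum M J\<^esub> f \<in> {f \<in> carrier (dsum M J). \<forall>j\<in>F. f j = \<zero>\<^bsub>M j\<^esub>}"
    proof -
      have fc: "f \<in> carrier (dsum M J)" using f by simp
      have "\<ominus>\<^bsub>dsum M J\<^esub> f \<in> carrier (dsum M J)" using fc by simp
      moreover have "\<forall>j\<in>F. (\<ominus>\<^bsub>dsum M J\<^esub> f) j = \<zero>\<^bsub>M j\<^esub>"
        using f dsum_neg[OF ag fc] FJ ag_neg0[OF ag] by simp
      ultimately show ?thesis by simp
    qed
  next
    fix a f assume a: "a \<in> carrier R" and f: "f \<in> {f \<in> carrier (dsum M J). \<forall>j\<in>F. f j = \<zero>\<^bsub>M j\<^esub>}"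
    show "a \<odot>\<^bsub>dsum M J\<^esub> f \<in> {f \<in> carrier (dsum M J). \<forall>j\<in>F. f j = \<zero>\<^bsub>M j\<^esub>}"
      using f a by (auto simp: dsum_carrier dsum_smult intro!: lmod_smult_closed[OF Mm] lmod_smult_zero[OF Mm[OF FJ]])
  qed (auto)
  have UV: "U \<inter> V = {\<zero>\<^bsub>dsum M J\<^esub>}"
  proof
    show "{\<zero>\<^bsub>dsum M J\<^esub>} \<subseteq> U \<inter> V" using Usub Vsub unfolding lsubmodule_def by blast
  next
    show "U \<inter> V \<subseteq> {\<zero>\<^bsub>dsum M J\<^esub>}"
    proof
      fix f assume f: "f \<in> U \<inter> V"
      hence fc: "f \<in> carrier (dsum M J)" and fF: "\<And>j. j \<in> F \<Longrightarrow> f j = \<zero>\<^bsub>M j\<^esub>" and fi: "f i = S f"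
        unfolding U_def V_def by auto
      have "f i = \<zero>\<^bsub>M i\<^esub>" using fi S0[OF fF] by simp
      hence "f = \<zero>\<^bsub>dsum M J\<^esub>"
        by (intro dsum_eqI[OF fc DS.zero_closed]) (use fF in \<open>auto simp: dsum_zero J_def\<close>)
      thus "f \<in> {\<zero>\<^bsub>dsum M J\<^esub>}" by simp
    qed
  qed
  have dec: "\<forall>x\<in>carrier (dsum M J). \<exists>u\<in>U. \<exists>v\<in>V. x = u \<oplus>\<^bsub>dsum M J\<^esub> v"
  proof
    fix x assume xc: "x \<in> carrier (dsum M J)"
    have xj: "\<And>j. j \<in> J \<Longrightarrow> x j \<in> carrier (M j)" using xc by (simp add: dsum_carrier)
    define u where "u = (\<lambda>l\<in>J. if l = i then S x else x l)"
    define v where "v = (\<lambda>l\<in>J. if l = i then x i \<ominus>\<^bsub>M i\<^esub> S x else \<zero>\<^bsub>M l\<^esub>)"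
    have uc: "u \<in> carrier (dsum M J)" using xj Sc[OF xc] by (auto simp: u_def dsum_carrier)
    have vc: "v \<in> carrier (dsum M J)" using xj[OF iJ] Sc[OF xc] zc by (auto simp: v_def dsum_carrier)
    have "S u = S x" unfolding S_def
      by (rule fs_cong[OF Mm[OF iJ]]) (use iF FJ pc[OF xc] in \<open>auto simp: u_def\<close>)
    hence "u \<in> U" using uc iJ unfolding U_def by (simp add: u_def)
    moreover have "v \<in> V" using vc iF FJ unfolding V_def by (auto simp: v_def)
    moreover have "x = u \<oplus>\<^bsub>dsum M J\<^esub> v"
    proof (rule dsum_eqI[OF xc DS.a_closed[OF uc vc]])
      fix j assume j: "j \<in> J"
      show "x j = (u \<oplus>\<^bsub>dsum M J\<^esub> v) j"
      proof (cases "j = i")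
        case True
        then show ?thesis using j xj[OF iJ] Sc[OF xc] ag_minus_add[OF ag[OF iJ], of "x i" "S x"]
          by (simp add: dsum_add u_def v_def Gi.a_comm)
      next
        case False
        then show ?thesis using j xj[OF j] ag[OF j]
          by (simp add: dsum_add u_def v_def abelian_group.axioms(1) abelian_monoid.r_zero)
      qed
    qed
    ultimately show "\<exists>u\<in>U. \<exists>v\<in>V. x = u \<oplus>\<^bsub>dsum M J\<^esub> v" by blast
  qed
  have ds: "direct_summand R (dsum M J) U"
    unfolding direct_summand_def using Usub Vsub UV dec by blast
  obtain x0 where x0: "x0 \<in> carrier Xm" "g i x0 \<noteq> \<zero>\<^bsub>M i\<^esub>" using nz i by blast
  have gc: "\<And>j x. j \<in> J \<Longrightarrow> x \<in> carrier Xm \<Longrightarrow> g j x \<in> carrier (M j)"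
    using gh JI lhom_closed by (metis subsetD)
  define f0 where "f0 = (\<lambda>l\<in>J. if l = i then g i x0 else \<zero>\<^bsub>M l\<^esub>)"
  have f0c: "f0 \<in> carrier (dsum M J)" using gc[OF iJ x0(1)] zc by (auto simp: f0_def dsum_carrier)
  have "S f0 = \<zero>\<^bsub>M i\<^esub>" by (rule S0) (use iF FJ in \<open>auto simp: f0_def\<close>)
  hence "f0 \<notin> U" using x0 iJ unfolding U_def by (simp add: f0_def)
  hence Une: "U \<noteq> carrier (dsum M J)" using f0c by blast
  have img: "tuple_map g J ` carrier Xm \<subseteq> U"
  proof
    fix t assume "t \<in> tuple_map g J ` carrier Xm"
    then obtain x where x: "x \<in> carrier Xm" "t = tuple_map g J x" by blast
    have tc: "t \<in> carrier (dsum M J)" using x gc by (auto simp: tuple_map_def dsum_carrier)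
    have "S t = finsum (M i) (\<lambda>j. p j (g j x)) F" unfolding S_def
      by (rule fs_cong[OF Mm[OF iJ]]) (use x FJ lhom_closed[OF ph' gc[OF FJ]] in \<open>auto simp: tuple_map_def\<close>)
    also have "\<dots> = g i x" using geq x by simp
    finally show "t \<in> U" using tc x iJ unfolding U_def by (simp add: tuple_map_def)
  qed
  have "\<not> left_minimal R Xm (dsum M J) (tuple_map g J)"
    unfolding left_minimal_def using ds Une img by blast
  thus ?thesis unfolding fork_def using finJ JI by blast
qed



lemma hard:
  fixes R :: "'a ring" and Xm :: "('a, 'c) module" and M :: "'i \<Rightarrow> ('a, 'b) module"
    and g :: "'i \<Rightarrow> 'c \<Rightarrow> 'b" and I :: "'i set"
  assumes Mi: "\<forall>i\<in>I. lmodule R (M i) \<and> finite_length R (M i) \<and> indecomposable R (M i)"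
    and gh: "\<forall>i\<in>I. lhom R Xm (M i) (g i)"
    and nf: "\<not> fork R Xm M g I"
  shows "\<exists>i\<in>I. in_sum_others R Xm M g I i"
proof -
  obtain J where finJ: "finite J" and JI: "J \<subseteq> I" and nlm: "\<not> left_minimal R Xm (dsum M J) (tuple_map g J)"
    using nf unfolding fork_def by blast
  obtain U where dsU: "direct_summand R (dsum M J) U" and Une: "U \<noteq> carrier (dsum M J)"
    and img: "tuple_map g J ` carrier Xm \<subseteq> U"
    using nlm unfolding left_minimal_def by blast
  obtain V where Usub: "lsubmodule R (dsum M J) U" and Vsub: "lsubmodule R (dsum M J) V"
    and UV: "U \<inter> V = {\<zero>\<^bsub>dsum M J\<^esub>}" and dec: "\<forall>x\<in>carrier (dsum M J). \<exists>u\<in>U. \<exists>v\<in>V. x = u \<oplus>\<^bsub>dsum M J\<^esub> v"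
    using dsU unfolding direct_summand_def by blast
  have Mm: "\<And>j. j \<in> J \<Longrightarrow> lmodule R (M j)" using Mi JI by blast
  have ag: "\<And>j. j \<in> J \<Longrightarrow> abelian_group (M j)" using Mm lmod_ag by blast
  have zc: "\<And>j. j \<in> J \<Longrightarrow> \<zero>\<^bsub>M j\<^esub> \<in> carrier (M j)" using ag by (simp add: abelian_group.axioms(1) abelian_monoid.zero_closed)
  interpret DS: abelian_group "dsum M J" by (rule dsum_ag) (rule ag)
  have Uc: "U \<subseteq> carrier (dsum M J)" and U0: "\<zero>\<^bsub>dsum M J\<^esub> \<in> U"
    and Uadd: "\<And>x y. x \<in> U \<Longrightarrow> y \<in> U \<Longrightarrow> x \<oplus>\<^bsub>dsum M J\<^esub> y \<in> U"
    and Uneg: "\<And>x. x \<in> U \<Longrightarrow> \<ominus>\<^bsub>dsum M J\<^esub> x \<in> U"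
    and Usm: "\<And>a x. a \<in> carrier R \<Longrightarrow> x \<in> U \<Longrightarrow> a \<odot>\<^bsub>dsum M J\<^esub> x \<in> U"
    using Usub unfolding lsubmodule_def by blast+
  have Vc: "V \<subseteq> carrier (dsum M J)" and V0: "\<zero>\<^bsub>dsum M J\<^esub> \<in> V"
    and Vadd: "\<And>x y. x \<in> V \<Longrightarrow> y \<in> V \<Longrightarrow> x \<oplus>\<^bsub>dsum M J\<^esub> y \<in> V"
    and Vneg: "\<And>x. x \<in> V \<Longrightarrow> \<ominus>\<^bsub>dsum M J\<^esub> x \<in> V"
    and Vsm: "\<And>a x. a \<in> carrier R \<Longrightarrow> x \<in> V \<Longrightarrow> a \<odot>\<^bsub>dsum M J\<^esub> x \<in> V"
    using Vsub unfolding lsubmodule_def by blast+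
  have uniq: "\<And>u v u' v'. u \<in> U \<Longrightarrow> v \<in> V \<Longrightarrow> u' \<in> U \<Longrightarrow> v' \<in> V \<Longrightarrow>
      u \<oplus>\<^bsub>dsum M J\<^esub> v = u' \<oplus>\<^bsub>dsum M J\<^esub> v' \<Longrightarrow> v = v'"
  proof -
    fix u v u' v' assume u: "u \<in> U" and v: "v \<in> V" and u': "u' \<in> U" and v': "v' \<in> V"
      and eq: "u \<oplus>\<^bsub>dsum M J\<^esub> v = u' \<oplus>\<^bsub>dsum M J\<^esub> v'"
    have c: "u \<in> carrier (dsum M J)" "v \<in> carrier (dsum M J)" "u' \<in> carrier (dsum M J)" "v' \<in> carrier (dsum M J)"
      using u v u' v' Uc Vc by auto
    define d where "d = \<ominus>\<^bsub>dsum M J\<^esub> u \<oplus>\<^bsub>dsum M J\<^esub> u'"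
    have dc: "d \<in> carrier (dsum M J)" using c d_def by simp
    have "v = \<ominus>\<^bsub>dsum M J\<^esub> u \<oplus>\<^bsub>dsum M J\<^esub> (u' \<oplus>\<^bsub>dsum M J\<^esub> v')"
      using eq c DS.add.inv_solve_left by simp
    hence vd: "v = d \<oplus>\<^bsub>dsum M J\<^esub> v'" using c unfolding d_def by (simp add: DS.a_assoc)
    hence "d = v \<oplus>\<^bsub>dsum M J\<^esub> \<ominus>\<^bsub>dsum M J\<^esub> v'" using c dc DS.add.inv_solve_right by simp
    hence dV: "d \<in> V" using Vadd Vneg v v' by simp
    have dU: "d \<in> U" unfolding d_def using Uadd Uneg u u' by simp
    have "d = \<zero>\<^bsub>dsum M J\<^esub>" using dU dV UV by blast
    thus "v = v'" using vd c by simp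
  qed
  define e where "e m = (THE v. v \<in> V \<and> (\<exists>u\<in>U. m = u \<oplus>\<^bsub>dsum M J\<^esub> v))" for m
  have eprop: "\<And>m. m \<in> carrier (dsum M J) \<Longrightarrow> e m \<in> V \<and> (\<exists>u\<in>U. m = u \<oplus>\<^bsub>dsum M J\<^esub> e m)"
  proof -
    fix m assume m: "m \<in> carrier (dsum M J)"
    have "\<exists>!v. v \<in> V \<and> (\<exists>u\<in>U. m = u \<oplus>\<^bsub>dsum M J\<^esub> v)"
      using dec m uniq by metis
    thus "e m \<in> V \<and> (\<exists>u\<in>U. m = u \<oplus>\<^bsub>dsum M J\<^esub> e m)" unfolding e_def by (rule theI')
  qed
  have echar: "\<And>u v. u \<in> U \<Longrightarrow> v \<in> V \<Longrightarrow> e (u \<oplus>\<^bsub>dsum M J\<^esub> v) = v"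
  proof -
    fix u v assume u: "u \<in> U" and v: "v \<in> V"
    have "u \<oplus>\<^bsub>dsum M J\<^esub> v \<in> carrier (dsum M J)" using u v Uc Vc by auto
    then obtain u' where "u' \<in> U" "e (u \<oplus>\<^bsub>dsum M J\<^esub> v) \<in> V"
      "u \<oplus>\<^bsub>dsum M J\<^esub> v = u' \<oplus>\<^bsub>dsum M J\<^esub> e (u \<oplus>\<^bsub>dsum M J\<^esub> v)" using eprop by blast
    thus "e (u \<oplus>\<^bsub>dsum M J\<^esub> v) = v" using uniq u v by metis
  qed
  have eV: "\<And>m. m \<in> carrier (dsum M J) \<Longrightarrow> e m \<in> V" using eprop by blast
  have ec: "\<And>m. m \<in> carrier (dsum M J) \<Longrightarrow> e m \<in> carrier (dsum M J)" using eV Vc by blast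
  have eadd: "\<And>m m'. m \<in> carrier (dsum M J) \<Longrightarrow> m' \<in> carrier (dsum M J) \<Longrightarrow>
      e (m \<oplus>\<^bsub>dsum M J\<^esub> m') = e m \<oplus>\<^bsub>dsum M J\<^esub> e m'"
  proof -
    fix m m' assume m: "m \<in> carrier (dsum M J)" and m': "m' \<in> carrier (dsum M J)"
    obtain u where u: "u \<in> U" "m = u \<oplus>\<^bsub>dsum M J\<^esub> e m" using eprop[OF m] by blast
    obtain u' where u': "u' \<in> U" "m' = u' \<oplus>\<^bsub>dsum M J\<^esub> e m'" using eprop[OF m'] by blast
    have c: "u \<in> carrier (dsum M J)" "u' \<in> carrier (dsum M J)" using u u' Uc by auto
    have "m \<oplus>\<^bsub>dsum M J\<^esub> m' = (u \<oplus>\<^bsub>dsum M J\<^esub> e m) \<oplus>\<^bsub>dsum M J\<^esub> (u' \<oplus>\<^bsub>dsum M J\<^esub> e m')"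
      using u(2) u'(2) by (rule arg_cong2[where f="add (dsum M J)"])
    also have "\<dots> = (u \<oplus>\<^bsub>dsum M J\<^esub> u') \<oplus>\<^bsub>dsum M J\<^esub> (e m \<oplus>\<^bsub>dsum M J\<^esub> e m')"
      using c ec[OF m] ec[OF m'] by (simp add: DS.a_ac)
    finally have "m \<oplus>\<^bsub>dsum M J\<^esub> m' = (u \<oplus>\<^bsub>dsum M J\<^esub> u') \<oplus>\<^bsub>dsum M J\<^esub> (e m \<oplus>\<^bsub>dsum M J\<^esub> e m')" .
    thus "e (m \<oplus>\<^bsub>dsum M J\<^esub> m') = e m \<oplus>\<^bsub>dsum M J\<^esub> e m'"
      using echar Uadd[OF u(1) u'(1)] Vadd[OF eV[OF m] eV[OF m']] by simp
  qed
  have dsm_add: "\<And>a x y. a \<in> carrier R \<Longrightarrow> x \<in> carrier (dsum M J) \<Longrightarrow> y \<in> carrier (dsum M J) \<Longrightarrow>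
      a \<odot>\<^bsub>dsum M J\<^esub> (x \<oplus>\<^bsub>dsum M J\<^esub> y) = a \<odot>\<^bsub>dsum M J\<^esub> x \<oplus>\<^bsub>dsum M J\<^esub> a \<odot>\<^bsub>dsum M J\<^esub> y"
    unfolding dsum_smult dsum_add
    by (rule restrict_ext) (auto simp: dsum_carrier intro!: lmod_smult_add[OF Mm])
  have esm: "\<And>a m. a \<in> carrier R \<Longrightarrow> m \<in> carrier (dsum M J) \<Longrightarrow> e (a \<odot>\<^bsub>dsum M J\<^esub> m) = a \<odot>\<^bsub>dsum M J\<^esub> e m"
  proof -
    fix a m assume a: "a \<in> carrier R" and m: "m \<in> carrier (dsum M J)"
    obtain u where u: "u \<in> U" "m = u \<oplus>\<^bsub>dsum M J\<^esub> e m" using eprop[OF m] by blast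
    have "a \<odot>\<^bsub>dsum M J\<^esub> m = a \<odot>\<^bsub>dsum M J\<^esub> (u \<oplus>\<^bsub>dsum M J\<^esub> e m)"
      using u(2) by (rule arg_cong)
    also have "\<dots> = a \<odot>\<^bsub>dsum M J\<^esub> u \<oplus>\<^bsub>dsum M J\<^esub> a \<odot>\<^bsub>dsum M J\<^esub> e m"
      using u(1) Uc by (intro dsm_add[OF a _ ec[OF m]]) auto
    finally have "a \<odot>\<^bsub>dsum M J\<^esub> m = a \<odot>\<^bsub>dsum M J\<^esub> u \<oplus>\<^bsub>dsum M J\<^esub> a \<odot>\<^bsub>dsum M J\<^esub> e m" .
    thus "e (a \<odot>\<^bsub>dsum M J\<^esub> m) = a \<odot>\<^bsub>dsum M J\<^esub> e m" using echar Usm[OF a u(1)] Vsm[OF a eV[OF m]] by simp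
  qed
  have eU: "\<And>u. u \<in> U \<Longrightarrow> e u = \<zero>\<^bsub>dsum M J\<^esub>"
  proof -
    fix u assume u: "u \<in> U"
    have "u = u \<oplus>\<^bsub>dsum M J\<^esub> \<zero>\<^bsub>dsum M J\<^esub>" using u Uc by auto
    thus "e u = \<zero>\<^bsub>dsum M J\<^esub>" using echar[OF u V0] by simp
  qed
  have eVV: "\<And>v. v \<in> V \<Longrightarrow> e v = v"
  proof -
    fix v assume v: "v \<in> V"
    have "v = \<zero>\<^bsub>dsum M J\<^esub> \<oplus>\<^bsub>dsum M J\<^esub> v" using v Vc by auto
    thus "e v = v" using echar[OF U0 v] by simp
  qed
  define E where "E k j x = e (inj_dsum M J j x) k" for k j x
  have injc: "\<And>j x. j \<in> J \<Longrightarrow> x \<in> carrier (M j) \<Longrightarrow> inj_dsum M J j x \<in> carrier (dsum M J)"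
    using zc by (auto simp: inj_dsum_def dsum_carrier)
  have coordc: "\<And>m k. m \<in> carrier (dsum M J) \<Longrightarrow> k \<in> J \<Longrightarrow> m k \<in> carrier (M k)"
    by (simp add: dsum_carrier)
  have Ec: "\<And>k j x. k \<in> J \<Longrightarrow> j \<in> J \<Longrightarrow> x \<in> carrier (M j) \<Longrightarrow> E k j x \<in> carrier (M k)"
    unfolding E_def using coordc ec injc by blast
  have Eh: "\<And>k j. k \<in> J \<Longrightarrow> j \<in> J \<Longrightarrow> lhom R (M j) (M k) (E k j)"
  proof -
    fix k j assume k: "k \<in> J" and j: "j \<in> J"
    show "lhom R (M j) (M k) (E k j)" unfolding lhom_def
    proof (intro conjI ballI)
      fix x assume "x \<in> carrier (M j)" thus "E k j x \<in> carrier (M k)" by (rule Ec[OF k j])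
    next
      fix x y assume x: "x \<in> carrier (M j)" and y: "y \<in> carrier (M j)"
      have "inj_dsum M J j (x \<oplus>\<^bsub>M j\<^esub> y) = inj_dsum M J j x \<oplus>\<^bsub>dsum M J\<^esub> inj_dsum M J j y"
        unfolding inj_dsum_def dsum_add
        by (rule restrict_ext) (use ag zc in \<open>auto simp: abelian_group.axioms(1) abelian_monoid.l_zero\<close>)
      hence "e (inj_dsum M J j (x \<oplus>\<^bsub>M j\<^esub> y)) = e (inj_dsum M J j x) \<oplus>\<^bsub>dsum M J\<^esub> e (inj_dsum M J j y)"
        using eadd injc[OF j x] injc[OF j y] by simp
      thus "E k j (x \<oplus>\<^bsub>M j\<^esub> y) = E k j x \<oplus>\<^bsub>M k\<^esub> E k j y" unfolding E_def using k by (simp add: dsum_add)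
    next
      fix a x assume a: "a \<in> carrier R" and x: "x \<in> carrier (M j)"
      have "inj_dsum M J j (a \<odot>\<^bsub>M j\<^esub> x) = a \<odot>\<^bsub>dsum M J\<^esub> inj_dsum M J j x"
        unfolding inj_dsum_def dsum_smult
        by (rule restrict_ext) (use a in \<open>auto simp: lmod_smult_zero[OF Mm]\<close>)
      hence "e (inj_dsum M J j (a \<odot>\<^bsub>M j\<^esub> x)) = a \<odot>\<^bsub>dsum M J\<^esub> e (inj_dsum M J j x)"
        using esm[OF a injc[OF j x]] by simp
      thus "E k j (a \<odot>\<^bsub>M j\<^esub> x) = a \<odot>\<^bsub>M k\<^esub> E k j x" unfolding E_def using k by (simp add: dsum_smult)
    qed
  qed
  have Dco: "\<And>m k. m \<in> carrier (dsum M J) \<Longrightarrow> k \<in> J \<Longrightarrow> e m k = finsum (M k) (\<lambda>l. E k l (m l)) J"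
  proof -
    fix m k assume m: "m \<in> carrier (dsum M J)" and k: "k \<in> J"
    have "(\<lambda>m. e m k) (cut_dsum M J J m) = finsum (M k) (\<lambda>l. (\<lambda>m. e m k) (inj_dsum M J l (m l))) J"
    proof (rule cut_lemma[OF ag Mm[OF k] _ _ m finJ subset_refl])
      show "\<And>m. m \<in> carrier (dsum M J) \<Longrightarrow> e m k \<in> carrier (M k)" using coordc ec k by blast
      show "\<And>m m'. m \<in> carrier (dsum M J) \<Longrightarrow> m' \<in> carrier (dsum M J) \<Longrightarrow>
          e (m \<oplus>\<^bsub>dsum M J\<^esub> m') k = e m k \<oplus>\<^bsub>M k\<^esub> e m' k" using eadd k by (simp add: dsum_add)
    qed
    thus "e m k = finsum (M k) (\<lambda>l. E k l (m l)) J" using cut_all[OF m] unfolding E_def by simp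
  qed
  have idemE: "idem R M J E" unfolding idem_def
  proof (intro conjI ballI)
    fix k j assume "k \<in> J" "j \<in> J" thus "lhom R (M j) (M k) (E k j)" by (rule Eh)
  next
    fix k j x assume k: "k \<in> J" and j: "j \<in> J" and x: "x \<in> carrier (M j)"
    have "E k j x = e (e (inj_dsum M J j x)) k" unfolding E_def using eVV eV injc[OF j x] by simp
    also have "\<dots> = finsum (M k) (\<lambda>l. E k l (e (inj_dsum M J j x) l)) J" using Dco ec injc[OF j x] k by blast
    finally show "finsum (M k) (\<lambda>l. E k l (E l j x)) J = E k j x" unfolding E_def by simp
  qed
  have goodJ: "goodM R M J" unfolding goodM_def
  proof
    fix j assume j: "j \<in> J"
    have "lmodule R (M j)" "finite_length R (M j)" "indecomposable R (M j)" using Mi JI j by blast+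
    thus "lmodule R (M j) \<and> (\<forall>a. lhom R (M j) (M j) a \<longrightarrow> \<not> bij_betw a (carrier (M j)) (carrier (M j)) \<longrightarrow>
        bij_betw (\<lambda>x. x \<ominus>\<^bsub>M j\<^esub> a x) (carrier (M j)) (carrier (M j)))"
      using local_end by blast
  qed
  have nz: "\<not> zeroE M J E"
  proof
    assume z: "zeroE M J E"
    obtain m where m: "m \<in> carrier (dsum M J)" "m \<notin> U" using Une Uc by blast
    have "e m = \<zero>\<^bsub>dsum M J\<^esub>"
    proof (rule dsum_eqI[OF ec[OF m(1)] DS.zero_closed])
      fix k assume k: "k \<in> J"
      have "e m k = finsum (M k) (\<lambda>l. E k l (m l)) J" using Dco[OF m(1) k] .
      also have "\<dots> = \<zero>\<^bsub>M k\<^esub>" by (rule fs_zero[OF Mm[OF k]]) (use z k m(1) in \<open>auto simp: zeroE_def dsum_carrier\<close>)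
      finally show "e m k = \<zero>\<^bsub>dsum M J\<^esub> k" using k by (simp add: dsum_zero)
    qed
    moreover obtain u where "u \<in> U" "m = u \<oplus>\<^bsub>dsum M J\<^esub> e m" using eprop[OF m(1)] by blast
    ultimately have "m = u" using Uc by auto
    thus False using m \<open>u \<in> U\<close> by simp
  qed
  have "\<not> small R M J E" using claim[OF finJ goodJ idemE] nz by blast
  then obtain i \<Phi> where iJ: "i \<in> J" and \<Phi>h: "\<forall>l\<in>J. lhom R (M l) (M i) (\<Phi> l)"
    and hb: "bij_betw (\<lambda>x. finsum (M i) (\<lambda>l. \<Phi> l (E l i x)) J) (carrier (M i)) (carrier (M i))"
    unfolding small_def by blast
  have \<Phi>h': "\<And>l. l \<in> J \<Longrightarrow> lhom R (M l) (M i) (\<Phi> l)" using \<Phi>h by blast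
  have iI: "i \<in> I" using iJ JI by blast
  interpret Gi: abelian_group "M i" by (rule ag[OF iJ])
  define H where "H j z = finsum (M i) (\<lambda>l. \<Phi> l (E l j z)) J" for j z
  have Hh: "\<And>j. j \<in> J \<Longrightarrow> lhom R (M j) (M i) (H j)"
  proof -
    fix j assume j: "j \<in> J"
    show "lhom R (M j) (M i) (H j)" unfolding H_def
    proof (rule lhom_finsumf[OF Mm[OF j] Mm[OF iJ] finJ])
      fix l assume l: "l \<in> J"
      show "lhom R (M j) (M i) (\<lambda>x. \<Phi> l (E l j x))" by (rule lhom_comp[OF Eh[OF l j] \<Phi>h'[OF l]])
    qed
  qed
  have Hc: "\<And>j z. j \<in> J \<Longrightarrow> z \<in> carrier (M j) \<Longrightarrow> H j z \<in> carrier (M i)" by (rule lhom_closed[OF Hh])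
  have hb': "bij_betw (H i) (carrier (M i)) (carrier (M i))" using hb unfolding H_def .
  define hinv where "hinv = inv_into (carrier (M i)) (H i)"
  have hinvh: "lhom R (M i) (M i) hinv" and hinv1: "\<And>x. x \<in> carrier (M i) \<Longrightarrow> hinv (H i x) = x"
    unfolding hinv_def using lhom_inv[OF Mm[OF iJ] Mm[OF iJ] Hh[OF iJ] hb'] by auto
  have nh: "lhom R (M i) (M i) (\<lambda>z. hinv (\<ominus>\<^bsub>M i\<^esub> z))"
    by (rule lhom_comp[OF lhom_negf[OF Mm[OF iJ] lhom_id] hinvh])
  define p where "p j z = hinv (\<ominus>\<^bsub>M i\<^esub> H j z)" for j z
  have ph: "\<And>j. j \<in> J \<Longrightarrow> lhom R (M j) (M i) (p j)"
  proof -
    fix j assume j: "j \<in> J"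
    show "lhom R (M j) (M i) (p j)" unfolding p_def by (rule lhom_comp[OF Hh[OF j] nh])
  qed
  have gc: "\<And>j x. j \<in> J \<Longrightarrow> x \<in> carrier Xm \<Longrightarrow> g j x \<in> carrier (M j)"
  proof -
    fix j x assume j: "j \<in> J" and x: "x \<in> carrier Xm"
    have "lhom R Xm (M j) (g j)" using gh JI j by blast
    thus "g j x \<in> carrier (M j)" using x by (rule lhom_closed)
  qed
  define \<psi> where "\<psi> m = finsum (M i) (\<lambda>l. \<Phi> l (m l)) J" for m
  have \<Phi>c: "\<And>m l. m \<in> carrier (dsum M J) \<Longrightarrow> l \<in> J \<Longrightarrow> \<Phi> l (m l) \<in> carrier (M i)"
    using lhom_closed[OF \<Phi>h' coordc] .
  have \<psi>c: "\<And>m. m \<in> carrier (dsum M J) \<Longrightarrow> \<psi> m \<in> carrier (M i)"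
    unfolding \<psi>_def by (rule fs_closed[OF Mm[OF iJ]]) (rule \<Phi>c)
  have \<psi>e: "\<And>l z. l \<in> J \<Longrightarrow> z \<in> carrier (M l) \<Longrightarrow> \<psi> (e (inj_dsum M J l z)) = H l z"
    unfolding \<psi>_def H_def E_def by simp
  have eqx: "\<And>x. x \<in> carrier Xm \<Longrightarrow> g i x = finsum (M i) (\<lambda>j. p j (g j x)) (J - {i})"
  proof -
    fix x assume x: "x \<in> carrier Xm"
    define t where "t = tuple_map g J x"
    have tc: "t \<in> carrier (dsum M J)" using gc x by (auto simp: t_def tuple_map_def dsum_carrier)
    have tU: "t \<in> U" using img x t_def by blast
    have tl: "\<And>l. l \<in> J \<Longrightarrow> t l = g l x" by (simp add: t_def tuple_map_def)
    have "(\<lambda>m. \<psi> (e m)) (cut_dsum M J J t) = finsum (M i) (\<lambda>l. (\<lambda>m. \<psi> (e m)) (inj_dsum M J l (t l))) J"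
    proof (rule cut_lemma[OF ag Mm[OF iJ] _ _ tc finJ subset_refl])
      show "\<And>m. m \<in> carrier (dsum M J) \<Longrightarrow> \<psi> (e m) \<in> carrier (M i)" using \<psi>c ec by blast
      fix m m' assume m: "m \<in> carrier (dsum M J)" and m': "m' \<in> carrier (dsum M J)"
      have "\<psi> (e (m \<oplus>\<^bsub>dsum M J\<^esub> m')) = finsum (M i) (\<lambda>l. \<Phi> l (e m l) \<oplus>\<^bsub>M i\<^esub> \<Phi> l (e m' l)) J"
        unfolding \<psi>_def eadd[OF m m']
      proof (rule fs_cong[OF Mm[OF iJ]])
        fix l assume l: "l \<in> J"
        show "\<Phi> l ((e m \<oplus>\<^bsub>dsum M J\<^esub> e m') l) = \<Phi> l (e m l) \<oplus>\<^bsub>M i\<^esub> \<Phi> l (e m' l)"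
          using l lhom_add[OF \<Phi>h'[OF l] coordc[OF ec[OF m] l] coordc[OF ec[OF m'] l]] by (simp add: dsum_add)
        show "\<Phi> l (e m l) \<oplus>\<^bsub>M i\<^esub> \<Phi> l (e m' l) \<in> carrier (M i)"
          using \<Phi>c[OF ec[OF m] l] \<Phi>c[OF ec[OF m'] l] by simp
      qed
      also have "\<dots> = \<psi> (e m) \<oplus>\<^bsub>M i\<^esub> \<psi> (e m')" unfolding \<psi>_def
        by (rule fs_add[OF Mm[OF iJ]]) (use \<Phi>c ec m m' in blast)+
      finally show "\<psi> (e (m \<oplus>\<^bsub>dsum M J\<^esub> m')) = \<psi> (e m) \<oplus>\<^bsub>M i\<^esub> \<psi> (e m')" .
    qed
    moreover have "\<psi> (e (cut_dsum M J J t)) = \<zero>\<^bsub>M i\<^esub>"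
    proof -
      have "e (cut_dsum M J J t) = \<zero>\<^bsub>dsum M J\<^esub>" using cut_all[OF tc] eU[OF tU] by simp
      moreover have "\<psi> \<zero>\<^bsub>dsum M J\<^esub> = \<zero>\<^bsub>M i\<^esub>" unfolding \<psi>_def
        by (rule fs_zero[OF Mm[OF iJ]]) (simp add: dsum_zero lhom_zero[OF Mm Mm[OF iJ] \<Phi>h'])
      ultimately show ?thesis by simp
    qed
    moreover have "finsum (M i) (\<lambda>l. \<psi> (e (inj_dsum M J l (t l)))) J = finsum (M i) (\<lambda>l. H l (g l x)) J"
      by (rule fs_cong[OF Mm[OF iJ]]) (use tl \<psi>e gc x Hc in auto)
    ultimately have sum0: "finsum (M i) (\<lambda>l. H l (g l x)) J = \<zero>\<^bsub>M i\<^esub>" by simp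
    define S' where "S' = finsum (M i) (\<lambda>l. H l (g l x)) (J - {i})"
    have S'c: "S' \<in> carrier (M i)" unfolding S'_def by (rule fs_closed[OF Mm[OF iJ]]) (use Hc gc x in auto)
    have Jeq: "J = insert i (J - {i})" using iJ by blast
    have "finsum (M i) (\<lambda>l. H l (g l x)) J = H i (g i x) \<oplus>\<^bsub>M i\<^esub> S'"
      unfolding S'_def by (subst Jeq, rule fs_ins[OF Mm[OF iJ]]) (use finJ Hc gc x iJ in auto)
    hence "H i (g i x) \<oplus>\<^bsub>M i\<^esub> S' = \<zero>\<^bsub>M i\<^esub>" using sum0 by simp
    hence "\<ominus>\<^bsub>M i\<^esub> S' = H i (g i x)" using S'c Hc[OF iJ gc[OF iJ x]] by (intro Gi.minus_equality)
    hence "g i x = hinv (\<ominus>\<^bsub>M i\<^esub> S')" using hinv1 gc[OF iJ x] by simp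
    also have "\<dots> = finsum (M i) (\<lambda>l. hinv (\<ominus>\<^bsub>M i\<^esub> H l (g l x))) (J - {i})"
      unfolding S'_def by (rule lhom_finsum[OF Mm[OF iJ] Mm[OF iJ] nh]) (use finJ Hc gc x in auto)
    finally show "g i x = finsum (M i) (\<lambda>j. p j (g j x)) (J - {i})" unfolding p_def .
  qed
  have "in_sum_others R Xm M g I i" unfolding in_sum_others_def
    using finJ JI ph eqx by (intro exI[of _ "J - {i}"] exI[of _ p]) auto
  thus ?thesis using iI by blast
qed



theorem lemma13p1:
  fixes R :: "'a ring" and Xm :: "('a, 'c) module" and M :: "'i \<Rightarrow> ('a, 'b) module"
    and g :: "'i \<Rightarrow> 'c \<Rightarrow> 'b" and I :: "'i set"
  assumes "artin_algebra R"
    and "lmodule R Xm" and "finite_length R Xm"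
    and "\<forall>i\<in>I. lmodule R (M i) \<and> finite_length R (M i) \<and> indecomposable R (M i)"
    and "\<forall>i\<in>I. lhom R Xm (M i) (g i)"
    and "\<forall>i\<in>I. \<exists>x\<in>carrier Xm. g i x \<noteq> \<zero>\<^bsub>M i\<^esub>"
  shows "fork R Xm M g I \<longleftrightarrow> (\<forall>i\<in>I. \<not> in_sum_others R Xm M g I i)"
proof
  assume f: "fork R Xm M g I"
  have Mi: "\<forall>i\<in>I. lmodule R (M i)" using assms(4) by blast
  show "\<forall>i\<in>I. \<not> in_sum_others R Xm M g I i"
  proof (intro ballI notI)
    fix i assume i: "i \<in> I" and ins: "in_sum_others R Xm M g I i"
    have "\<not> fork R Xm M g I" by (rule easy[OF Mi assms(5) assms(6) i ins])
    thus False using f by simp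
  qed
next
  assume n: "\<forall>i\<in>I. \<not> in_sum_others R Xm M g I i"
  show "fork R Xm M g I"
  proof (rule ccontr)
    assume "\<not> fork R Xm M g I"
    hence "\<exists>i\<in>I. in_sum_others R Xm M g I i" by (rule hard[OF assms(4) assms(5)])
    thus False using n by blast
  qed
qed

end
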